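(* Let $u,w\in G(m,p,n)$. Then $$\operatorname{codim}\operatorname{fix}(u)+\operatorname{codim}\operatorname{fix}(u^{-1}w)\ \ge\ n+c(w)-2|\Pi_u(w)|+\#\{\text{parts of }\Pi_u(w)\text{ of nonzero weight}\}.$$ Moreover, if equality holds, then for every part $B$ of $\Pi_u(w)$ we have $c(u|_B)+c(u^{-1}w|_B)=\#\operatorname{Supp}(B)-c(w|_B)+2$, and exactly one of the following holds: (i) $\mathrm{wt}(w|_B)=0$ and all cycles of $u|_B$ and of $u^{-1}w|_B$ have weight $0$; (ii) $\mathrm{wt}(u|_B)=\mathrm{wt}(w|_B)\neq0$, one cycle of $u|_B$ has weight $\mathrm{wt}(w|_B)$ and all its other cycles have weight $0$, and all cycles of $u^{-1}w|_B$ have weight $0$; (iii) $\mathrm{wt}(u^{-1}w|_B)=\mathrm{wt}(w|_B)\ne0$, one cycle of $u^{-1}w|_B$ has weight $\mathrm{wt}(w|_B)$ and all its other cycles have weight $0$, and all cycles of $u|_B$ have weight $0$.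
   Context: Let $m,p,n$ be positive integers with $p\mid m$ and $\zeta=e^{2\pi i/m}$. The group $G(m,1,n)$ consists of pairs $w=[u;a]$ with $u\in\mathfrak S_n$ (the underlying permutation) and $a=(a_1,\dots,a_n)\in(\mathbb Z/m\mathbb Z)^n$ (the weights); $[u;a]$ is identified with the $n\times n$ monomial matrix having entry $\zeta^{a_i}$ in position $(u(i),i)$ and zeros elsewhere, the group law is matrix multiplication, and the group acts on $\mathbb C^n$. A cycle of $w$ is a cycle of $u$ (fixed points count as cycles of size $1$); $c(w)$ is the number of cycles of $w$ and $c_0(w)$ the number of cycles of weight $0$, where the weight of a set $I\subseteq[n]$ (e.g. the underlying set of a cycle) is $\sum_{i\in I}a_i\in\mathbb Z/m\mathbb Z$, and $\mathrm{wt}(w)=\sum_{i=1}^n a_i$. Since $p\mid m$, it makes sense to say an element of $\mathbb Z/m\mathbb Z$ is $\equiv 0\pmod p$. $G(m,p,n)=\{w\in G(m,1,n):\mathrm{wt}(w)\equiv 0\pmod p\}$. $\operatorname{codim}\operatorname{fix}(g)=n-\dim\ker(g-1)$ for the action on $\mathbb C^n$. For $u,w\in G(m,p,n)$, $\Pi_u(w)$ is the set partition of the cycles of $w$ generated by the relation: cycles $C_1,C_2$ of $w$ are related if some cycle of $u$ intersects both (as subsets of $[n]$), closed under transitivity. For a part $B$, $\operatorname{Supp}(B)\subseteq[n]$ is the union of the cycles in $B$; it is stable under the underlying permutations of $u$ and $w$. For $x\in\{u,w,u^{-1}w\}$, $x|_B$ denotes the restriction of $x$ to $\operatorname{Supp}(B)$: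 the permutation of $\operatorname{Supp}(B)$ induced by $x$ together with the weights $a_i$, $i\in\operatorname{Supp}(B)$ (an element of $G(m,1,\#\operatorname{Supp}(B))$); its cycles, $c(x|_B)$, and $\mathrm{wt}(x|_B)=\sum_{i\in\operatorname{Supp}(B)}a_i$ are computed within $\operatorname{Supp}(B)$. The weight of a part $B$ is $\mathrm{wt}(w|_B)$. *)

theory Defs
  imports Complex_Main "Jordan_Normal_Form.Matrix_Kernel"
begin

text \<open>An element [u;a] of G(m,1,n) is a pair (u,a): u a permutation of {..<n}
  (identity outside), a the weights, stored as canonical representatives in
  {0..<m} of Z/mZ (and 0 outside {..<n}).\<close>

type_synonym gelt = "(nat \<Rightarrow> nat) \<times> (nat \<Rightarrow> int)"

definition in_G1 :: "nat \<Rightarrow> nat \<Rightarrow> gelt \<Rightarrow> bool" where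
  "in_G1 m n w \<longleftrightarrow> fst w permutes {..<n} \<and> (\<forall>i. 0 \<le> snd w i \<and> snd w i < int m)
     \<and> (\<forall>i\<ge>n. snd w i = 0)"

definition wtset :: "nat \<Rightarrow> (nat \<Rightarrow> int) \<Rightarrow> nat set \<Rightarrow> int" where
  "wtset m a I = (\<Sum>i\<in>I. a i) mod int m"

definition wt :: "nat \<Rightarrow> nat \<Rightarrow> gelt \<Rightarrow> int" where
  "wt m n w = wtset m (snd w) {..<n}"

definition in_G :: "nat \<Rightarrow> nat \<Rightarrow> nat \<Rightarrow> gelt \<Rightarrow> bool" where
  "in_G m p n w \<longleftrightarrow> in_G1 m n w \<and> int p dvd wt m n w"

definition gmat :: "nat \<Rightarrow> nat \<Rightarrow> gelt \<Rightarrow> complex mat" where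
  "gmat m n w = mat n n (\<lambda>(i,j). if i = fst w j
       then cis (2 * pi * real_of_int (snd w j) / real m) else 0)"

text \<open>Group law (matrix multiplication): [u;a][v;b] = [u o v; i -> b_i + a_(v i)];
  inverse [u;a]^-1 = [u^-1; i -> - a_(u^-1 i)].\<close>
definition gmult :: "nat \<Rightarrow> gelt \<Rightarrow> gelt \<Rightarrow> gelt" where
  "gmult m x y = (fst x \<circ> fst y, \<lambda>i. (snd y i + snd x (fst y i)) mod int m)"

definition ginv :: "nat \<Rightarrow> gelt \<Rightarrow> gelt" where
  "ginv m x = (inv_into UNIV (fst x), \<lambda>i. (- snd x (inv_into UNIV (fst x) i)) mod int m)"

definition codimfix :: "nat \<Rightarrow> nat \<Rightarrow> gelt \<Rightarrow> nat" where
  "codimfix m n w = n - kernel_dim (gmat m n w - 1\<^sub>m n)"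

definition cyc :: "(nat \<Rightarrow> nat) \<Rightarrow> nat \<Rightarrow> nat set" where
  "cyc f i = {(f ^^ k) i | k. True}"

text \<open>Cycles of x lying in a set S stable under x (= cycles of the restriction x|_S).\<close>
definition cycles_on :: "gelt \<Rightarrow> nat set \<Rightarrow> nat set set" where
  "cycles_on x S = cyc (fst x) ` S"

definition cycles :: "nat \<Rightarrow> gelt \<Rightarrow> nat set set" where
  "cycles n x = cycles_on x {..<n}"

definition Pi_rel :: "nat \<Rightarrow> gelt \<Rightarrow> gelt \<Rightarrow> (nat set \<times> nat set) set" where
  "Pi_rel n u w = {(C1, C2). C1 \<in> cycles n w \<and> C2 \<in> cycles n w \<and>
      (\<exists>D\<in>cycles n u. D \<inter> C1 \<noteq> {} \<and> D \<inter> C2 \<noteq> {})}"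

definition Pi_part :: "nat \<Rightarrow> gelt \<Rightarrow> gelt \<Rightarrow> nat set set set" where
  "Pi_part n u w = cycles n w // (Pi_rel n u w)\<^sup>+"

definition Supp :: "nat set set \<Rightarrow> nat set" where
  "Supp B = \<Union>B"

end

theory Submission
  imports Defs "HOL-Combinatorics.Orbits"
begin


definition stab :: "(nat \<Rightarrow> nat) \<Rightarrow> nat set \<Rightarrow> bool" where
  "stab f T \<longleftrightarrow> (\<forall>x\<in>T. f x \<in> T)"

lemma cyc_orbit: "permutation f \<Longrightarrow> cyc f i = orbit f i"
  by (simp add: cyc_def orbit_altdef_permutation)

lemma self_in_cyc[simp]: "i \<in> cyc f i"
  unfolding cyc_def by (auto intro: exI[of _ 0])

lemma funpow_in_cyc[simp]: "(f ^^ k) i \<in> cyc f i"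
  unfolding cyc_def by auto

lemma f_in_cyc[simp]: "f i \<in> cyc f i"
  using funpow_in_cyc[where k=1 and f=f and i=i] by simp

lemma cyc_eq: assumes "permutation f" "j \<in> cyc f i" shows "cyc f j = cyc f i"
  using assms cyc_orbit[OF assms(1)]
  by (metis cyclic_on_orbit' orbit_cyclic_eq3)

lemma cyc_sym: assumes "permutation f" "j \<in> cyc f i" shows "i \<in> cyc f j"
  using cyc_eq[OF assms] by simp

lemma cyc_meet: assumes "permutation f" "x \<in> cyc f i" "x \<in> cyc f j" shows "cyc f i = cyc f j"
  using cyc_eq[OF assms(1,2)] cyc_eq[OF assms(1,3)] by simp

lemma finite_cyc: "permutation f \<Longrightarrow> finite (cyc f i)"
  by (simp add: cyc_orbit finite_orbit permutation_self_in_orbit)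

lemma cyc_sub_stab: assumes "stab f T" "i \<in> T" shows "cyc f i \<subseteq> T"
proof -
  have "(f ^^ k) i \<in> T" for k using assms by (induct k) (auto simp: stab_def)
  thus ?thesis unfolding cyc_def by auto
qed

lemma stab_cyc: "permutation f \<Longrightarrow> stab f (cyc f i)"
  unfolding stab_def using cyc_eq f_in_cyc by metis

lemma stab_comp: "stab f T \<Longrightarrow> stab g T \<Longrightarrow> stab (f \<circ> g) T"
  unfolding stab_def by auto

lemma stab_image_eq: assumes "permutation f" "finite T" "stab f T" shows "f ` T = T"
proof -
  have "inj f" using assms(1) permutation_bijective bij_is_inj by blast
  thus ?thesis using assms by (intro endo_inj_surj) (auto simp: stab_def inj_on_def)
qed

lemma stab_diff: assumes "permutation f" "finite S" "stab f S" "T \<subseteq> S" "stab f T"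
  shows "stab f (S - T)"
proof -
  have inj: "inj f" using assms(1) permutation_bijective bij_is_inj by blast
  have "f ` T = T" using assms finite_subset stab_image_eq by metis
  thus ?thesis using assms(3) inj unfolding stab_def by (auto dest: injD)
qed

lemma stab_Int: "stab f A \<Longrightarrow> stab f B \<Longrightarrow> stab f (A \<inter> B)"
  unfolding stab_def by auto

lemma stab_Un: "stab f A \<Longrightarrow> stab f B \<Longrightarrow> stab f (A \<union> B)"
  unfolding stab_def by auto

lemma cnt_Un: assumes "permutation f" "finite S1" "finite S2" "S1 \<inter> S2 = {}" "stab f S1" "stab f S2"
  shows "card (cyc f ` (S1 \<union> S2)) = card (cyc f ` S1) + card (cyc f ` S2)"
proof -
  have "cyc f ` S1 \<inter> cyc f ` S2 = {}"
  proof (rule ccontr)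
    assume "cyc f ` S1 \<inter> cyc f ` S2 \<noteq> {}"
    then obtain x y where "x \<in> S1" "y \<in> S2" "cyc f x = cyc f y" by auto
    moreover have "cyc f x \<subseteq> S1" using cyc_sub_stab assms \<open>x \<in> S1\<close> by blast
    moreover have "cyc f y \<subseteq> S2" using cyc_sub_stab assms \<open>y \<in> S2\<close> by blast
    ultimately show False using assms(4) self_in_cyc by blast
  qed
  thus ?thesis by (simp add: image_Un card_Un_disjoint assms)
qed

lemma cnt_le: "finite S \<Longrightarrow> card (cyc f ` S) \<le> card S"
  by (rule card_image_le)

lemma sum_over_cycles: assumes "permutation f" "finite S" "stab f S"
  shows "(\<Sum>i\<in>S. g i) = (\<Sum>C\<in>cyc f ` S. \<Sum>i\<in>C. g i)"
proof -
  have U: "\<Union>(cyc f ` S) = S" using cyc_sub_stab[OF assms(3)] self_in_cyc by blast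
  have "(\<Sum>C\<in>cyc f ` S. \<Sum>i\<in>C. g i) = sum g (\<Union>(cyc f ` S))"
    using sum.Union_disjoint[of "cyc f ` S" g] assms finite_cyc cyc_meet[OF assms(1)]
    by (smt (verit, ccfv_SIG) comp_apply disjoint_iff image_iff)
  thus ?thesis using U by simp
qed


definition tr :: "(nat \<Rightarrow> nat) \<Rightarrow> nat \<Rightarrow> nat \<Rightarrow> nat \<Rightarrow> nat" where
  "tr h a b = (\<lambda>x. if x = a then h b else if x = b then h a else h x)"

lemma tr_comp: "tr h a b = h \<circ> transpose a b"
  unfolding tr_def by (auto simp: transpose_def fun_eq_iff)

lemma perm_tr: "permutation h \<Longrightarrow> permutation (tr h a b)"
  unfolding tr_comp by (simp add: permutation_compose permutation_swap_id)

lemma tr_tr: "a \<noteq> b \<Longrightarrow> tr (tr h a b) a b = h"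
  unfolding tr_def by (auto simp: fun_eq_iff)

lemma stab_tr: "stab h S \<Longrightarrow> a \<in> S \<Longrightarrow> b \<in> S \<Longrightarrow> stab (tr h a b) S"
  unfolding stab_def tr_def by auto

lemma cyc_agree: assumes "\<forall>x\<in>cyc h z. h' x = h x" shows "cyc h' z = cyc h z"
proof -
  have "(h' ^^ k) z = (h ^^ k) z" for k
    by (induct k) (use assms funpow_in_cyc in auto)
  thus ?thesis unfolding cyc_def by auto
qed

lemma cyc_tr_away: assumes "a \<notin> cyc h z" "b \<notin> cyc h z" shows "cyc (tr h a b) z = cyc h z"
  using assms by (intro cyc_agree) (auto simp: tr_def)

lemma tr_separate: assumes "permutation h" "a \<noteq> b" "b \<in> cyc h a"
  shows "b \<notin> cyc (tr h a b) a"
proof -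
  let ?h' = "tr h a b"
  have bo: "b \<in> orbit h a" using assms cyc_orbit by auto
  define k where "k = funpow_dist h a b"
  have hk: "(h ^^ k) a = b" unfolding k_def using funpow_dist_prop[OF bo] .
  have k0: "k \<noteq> 0" using hk assms(2) by (cases k) auto
  have kl: "\<And>j. j < k \<Longrightarrow> (h ^^ j) a \<noteq> b" unfolding k_def by (rule funpow_dist_least)
  define T where "T = {(h ^^ j) a | j. 1 \<le> j \<and> j \<le> k}"
  have aT: "a \<notin> T"
  proof
    assume "a \<in> T"
    then obtain j where j: "1 \<le> j" "j \<le> k" "(h ^^ j) a = a" unfolding T_def by auto
    show False
    proof (cases "j = k")
      case True thus False using j hk assms(2) by simp
    next
      case False
      have "(h ^^ (k - j)) a = (h ^^ (k - j)) ((h ^^ j) a)" using j by simp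
      also have "\<dots> = (h ^^ ((k - j) + j)) a" by (simp add: funpow_add)
      also have "\<dots> = (h ^^ k) a" using j by simp
      finally show False using kl[of "k - j"] hk j False by auto
    qed
  qed
  have bT: "b \<in> T" unfolding T_def using hk k0 by auto
  have "stab ?h' T"
    unfolding stab_def
  proof
    fix z assume "z \<in> T"
    then obtain j where j: "1 \<le> j" "j \<le> k" "z = (h ^^ j) a" unfolding T_def by auto
    have za: "z \<noteq> a" using aT \<open>z \<in> T\<close> by auto
    show "?h' z \<in> T"
    proof (cases "z = b")
      case True
      hence "?h' z = (h ^^ 1) a" using assms(2) by (simp add: tr_def)
      thus ?thesis unfolding T_def using k0 by (intro CollectI exI[of _ 1]) auto
    next
      case False
      hence jk: "j < k" using j hk by (cases "j = k") auto
      have "?h' z = (h ^^ Suc j) a" using False za j by (simp add: tr_def)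
      thus ?thesis unfolding T_def using jk by (intro CollectI exI[of _ "Suc j"]) auto
    qed
  qed
  hence "cyc ?h' b \<subseteq> T" using bT cyc_sub_stab by blast
  hence "a \<notin> cyc ?h' b" using aT by blast
  thus ?thesis using cyc_sym[OF perm_tr[OF assms(1)]] by blast
qed

lemma tr_merge: assumes "permutation h" "a \<noteq> b" "b \<notin> cyc h a"
  shows "b \<in> cyc (tr h a b) a"
proof -
  let ?h' = "tr h a b"
  have ph': "permutation ?h'" using perm_tr[OF assms(1)] .
  have bo: "b \<in> orbit h b" by (rule permutation_self_in_orbit[OF assms(1)])
  define L where "L = funpow_dist1 h b b"
  have hL: "(h ^^ L) b = b" unfolding L_def using funpow_dist1_prop[OF bo] .
  have Ll: "\<And>j. 0 < j \<Longrightarrow> j < L \<Longrightarrow> (h ^^ j) b \<noteq> b" unfolding L_def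
    by (rule funpow_dist1_least)
  have acb: "a \<notin> cyc h b" using cyc_sym[OF assms(1)] assms(3) by blast
  have "\<forall>j. 1 \<le> j \<longrightarrow> j \<le> L \<longrightarrow> (h ^^ j) b \<in> cyc ?h' a"
  proof
    fix j show "1 \<le> j \<longrightarrow> j \<le> L \<longrightarrow> (h ^^ j) b \<in> cyc ?h' a"
    proof (induct j)
      case 0 then show ?case by simp
    next
      case (Suc j)
      show ?case
      proof (cases "j = 0")
        case True
        have "?h' a = h b" by (simp add: tr_def)
        thus ?thesis using True f_in_cyc[of ?h' a] by simp
      next
        case False
        show ?thesis
        proof (intro impI)
          assume "Suc j \<le> L"
          hence jL: "j < L" by simp
          define z where "z = (h ^^ j) b"
          have zb: "z \<noteq> b" using Ll[of j] False jL z_def by auto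
          have "z \<in> cyc h b" unfolding z_def by (rule funpow_in_cyc)
          hence za: "z \<noteq> a" using acb by blast
          have "1 \<le> j" "j \<le> L" using False jL by auto
          hence zin: "z \<in> cyc ?h' a" using Suc.hyps unfolding z_def by blast
          have "?h' z = h z" using za zb by (simp add: tr_def)
          moreover have "?h' z \<in> cyc ?h' a" using stab_cyc[OF ph'] zin unfolding stab_def by blast
          ultimately show "(h ^^ Suc j) b \<in> cyc ?h' a" using z_def by simp
        qed
      qed
    qed
  qed
  moreover have "1 \<le> L" unfolding L_def by simp
  ultimately have "(h ^^ L) b \<in> cyc ?h' a" by simp
  thus ?thesis using hL by simp
qed

lemma card_cycles_tr:
  assumes "permutation h" "finite S" "stab h S" "a \<in> S" "b \<in> S" "a \<noteq> b"
  shows "int (card (cyc (tr h a b) ` S)) = int (card (cyc h ` S)) + (if b \<in> cyc h a then 1 else -1)"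
proof -
  let ?h' = "tr h a b"
  have ph': "permutation ?h'" using perm_tr[OF assms(1)] .
  define P where "P g = {C \<in> cyc g ` S. a \<notin> C \<and> b \<notin> C}" for g
  have dec: "cyc g ` S = P g \<union> {cyc g a, cyc g b}" if "permutation g" for g
  proof -
    have "C \<in> cyc g ` S \<Longrightarrow> a \<in> C \<Longrightarrow> C = cyc g a" for C using cyc_eq[OF that] by auto
    moreover have "C \<in> cyc g ` S \<Longrightarrow> b \<in> C \<Longrightarrow> C = cyc g b" for C using cyc_eq[OF that] by auto
    ultimately show ?thesis unfolding P_def using assms(4,5) by auto
  qed
  have disj: "P g \<inter> {cyc g a, cyc g b} = {}" for g unfolding P_def by auto
  have finP: "finite (P g)" for g unfolding P_def using assms(2) by auto
  have c2: "card {cyc g a, cyc g b} = (if b \<in> cyc g a then 1 else 2)" if "permutation g" for g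
  proof (cases "b \<in> cyc g a")
    case True
    hence "cyc g b = cyc g a" using cyc_eq[OF that] by blast
    thus ?thesis using True by simp
  next
    case False
    hence "cyc g a \<noteq> cyc g b" by (metis self_in_cyc)
    thus ?thesis using False by simp
  qed
  have Peq: "P ?h' = P h"
  proof -
    have "P h \<subseteq> P ?h'"
    proof
      fix C assume "C \<in> P h"
      then obtain z where "z \<in> S" "C = cyc h z" "a \<notin> C" "b \<notin> C" unfolding P_def by auto
      thus "C \<in> P ?h'" unfolding P_def using cyc_tr_away[of a h z b] by auto
    qed
    moreover have "P ?h' \<subseteq> P h"
    proof
      fix C assume "C \<in> P ?h'"
      then obtain z where "z \<in> S" "C = cyc ?h' z" "a \<notin> C" "b \<notin> C" unfolding P_def by auto
      thus "C \<in> P h" unfolding P_def using cyc_tr_away[of a ?h' z b] tr_tr[OF assms(6), of h] by auto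
    qed
    ultimately show ?thesis by blast
  qed
  have cg: "card (cyc g ` S) = card (P g) + (if b \<in> cyc g a then 1 else 2)" if "permutation g" for g
  proof -
    have "card (cyc g ` S) = card (P g \<union> {cyc g a, cyc g b})" using dec[OF that] by simp
    also have "\<dots> = card (P g) + card {cyc g a, cyc g b}"
      by (rule card_Un_disjoint) (use finP disj in auto)
    finally show ?thesis using c2[OF that] by simp
  qed
  have ch: "card (cyc h ` S) = card (P h) + (if b \<in> cyc h a then 1 else 2)" using cg[OF assms(1)] .
  have ch': "card (cyc ?h' ` S) = card (P h) + (if b \<in> cyc ?h' a then 1 else 2)"
    using cg[OF ph'] Peq by simp
  show ?thesis
  proof (cases "b \<in> cyc h a")
    case True
    then show ?thesis using ch ch' tr_separate[OF assms(1,6) True] by simp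
  next
    case False
    then show ?thesis using ch ch' tr_merge[OF assms(1,6) False] by simp
  qed
qed


definition conn :: "(nat \<Rightarrow> nat) \<Rightarrow> (nat \<Rightarrow> nat) \<Rightarrow> nat set \<Rightarrow> bool" where
  "conn f g S \<longleftrightarrow> (\<forall>T. T \<subseteq> S \<longrightarrow> T \<noteq> {} \<longrightarrow> stab f T \<longrightarrow> stab g T \<longrightarrow> T = S)"

lemma connD: "conn f g S \<Longrightarrow> T \<subseteq> S \<Longrightarrow> T \<noteq> {} \<Longrightarrow> stab f T \<Longrightarrow> stab g T \<Longrightarrow> T = S"
  unfolding conn_def by blast

lemma comp_tr: "f \<circ> tr h a b = tr (f \<circ> h) a b"
  unfolding tr_def by (auto simp: fun_eq_iff)

lemma RH_fixed:
  assumes pf: "permutation f" and fin: "finite S" and sf: "stab f S" and sg: "stab g S"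
    and cn: "conn f g S" and fx: "\<forall>a\<in>S. g a = a"
  shows "card (cyc f ` S) + card (cyc g ` S) + card (cyc (f \<circ> g) ` S) \<le> card S + 2"
proof -
  have cg: "cyc g x = {x}" if "x \<in> S" for x
  proof -
    have "stab g {x}" using fx that unfolding stab_def by auto
    thus ?thesis using cyc_sub_stab[of g "{x}" x] self_in_cyc[of x g] by auto
  qed
  have "cyc g ` S = (\<lambda>x. {x}) ` S" using cg by auto
  hence c1: "card (cyc g ` S) = card S" by (simp add: card_image)
  have "cyc (f \<circ> g) x = cyc f x" if "x \<in> S" for x
  proof (rule cyc_agree)
    show "\<forall>y\<in>cyc f x. (f \<circ> g) y = f y" using cyc_sub_stab[OF sf that] fx by auto
  qed
  hence c2: "cyc (f \<circ> g) ` S = cyc f ` S" by auto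
  have c3: "card (cyc f ` S) \<le> 1"
  proof (cases "S = {}")
    case True thus ?thesis by simp
  next
    case False
    have "cyc f x = S" if "x \<in> S" for x
    proof -
      have "stab g (cyc f x)" using cyc_sub_stab[OF sf that] fx unfolding stab_def by auto
      thus ?thesis using connD[OF cn cyc_sub_stab[OF sf that] _ stab_cyc[OF pf]] self_in_cyc[of x f] by blast
    qed
    hence "cyc f ` S = {S}" using False by auto
    thus ?thesis by simp
  qed
  show ?thesis using c1 c2 c3 by simp
qed

lemma RH_aux:
  assumes pf: "permutation f"
  shows "\<forall>g S. card S - card (cyc g ` S) = N \<longrightarrow> permutation g \<longrightarrow> finite S \<longrightarrow> stab f S
     \<longrightarrow> stab g S \<longrightarrow> conn f g S
     \<longrightarrow> card (cyc f ` S) + card (cyc g ` S) + card (cyc (f \<circ> g) ` S) \<le> card S + 2"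
proof (induction N rule: less_induct)
  case (less N)
  show ?case
  proof (intro allI impI)
    fix g S
    assume N: "card S - card (cyc g ` S) = N" and pg: "permutation g" and fin: "finite S"
      and sf: "stab f S" and sg: "stab g S" and cn: "conn f g S"
    show "card (cyc f ` S) + card (cyc g ` S) + card (cyc (f \<circ> g) ` S) \<le> card S + 2"
    proof (cases "\<forall>a\<in>S. g a = a")
      case True
      thus ?thesis using RH_fixed[OF pf fin sf sg cn] by blast
    next
      case False
      then obtain a where aS: "a \<in> S" and ga: "g a \<noteq> a" by blast
      define b where "b = g a"
      have bS: "b \<in> S" using sg aS unfolding stab_def b_def by auto
      have ab: "a \<noteq> b" using ga b_def by auto
      define g' where "g' = tr g a b"
      have pg': "permutation g'" unfolding g'_def using perm_tr[OF pg] .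
      have sg': "stab g' S" unfolding g'_def using stab_tr[OF sg aS bS] .
      have gg': "g = tr g' a b" unfolding g'_def using tr_tr[OF ab] by simp
      have bc: "b \<in> cyc g a" unfolding b_def by simp
      have cg': "int (card (cyc g' ` S)) = int (card (cyc g ` S)) + 1"
        using card_cycles_tr[OF pg fin sg aS bS ab] bc unfolding g'_def by simp
      have pfg': "permutation (f \<circ> g')" using pf pg' permutation_compose by blast
      have sfg': "stab (f \<circ> g') S" using stab_comp[OF sf sg'] .
      have fg: "f \<circ> g = tr (f \<circ> g') a b" using gg' comp_tr by simp
      have cfg: "int (card (cyc (f \<circ> g) ` S)) = int (card (cyc (f \<circ> g') ` S))
           + (if b \<in> cyc (f \<circ> g') a then 1 else -1)"
        unfolding fg using card_cycles_tr[OF pfg' fin sfg' aS bS ab] .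
      have le1: "card (cyc g' ` S) \<le> card S" using cnt_le[OF fin] .
      have Nlt: "card S - card (cyc g' ` S) < N" using N cg' le1 by linarith
      show ?thesis
      proof (cases "conn f g' S")
        case True
        have "card (cyc f ` S) + card (cyc g' ` S) + card (cyc (f \<circ> g') ` S) \<le> card S + 2"
          using less.IH[OF Nlt] pg' fin sf sg' True by blast
        thus ?thesis using cg' cfg by (auto split: if_splits)
      next
        case False
        define T where "T = \<Inter>{X. X \<subseteq> S \<and> a \<in> X \<and> stab f X \<and> stab g' X}"
        have Tmin: "T \<subseteq> X" if "X \<subseteq> S" "a \<in> X" "stab f X" "stab g' X" for X
          unfolding T_def using that by blast
        have TS: "T \<subseteq> S" using Tmin[of S] aS sf sg' by blast
        have aT: "a \<in> T" unfolding T_def by blast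
        have sfT: "stab f T" unfolding T_def stab_def by blast
        have sg'T: "stab g' T" unfolding T_def stab_def by blast
        have finT: "finite T" using TS fin finite_subset by blast
        have connT: "conn f g' T"
          unfolding conn_def
        proof (intro allI impI)
          fix X assume XT: "X \<subseteq> T" and Xne: "X \<noteq> {}" and sX: "stab f X" "stab g' X"
          show "X = T"
          proof (cases "a \<in> X")
            case True thus ?thesis using Tmin[of X] XT TS sX by blast
          next
            case False
            have "stab f (T - X)" "stab g' (T - X)"
              using stab_diff[OF pf finT sfT XT sX(1)] stab_diff[OF pg' finT sg'T XT sX(2)] by auto
            hence "T \<subseteq> T - X" using Tmin[of "T - X"] TS aT False by blast
            thus ?thesis using XT Xne by blast
          qed
        qed
        have bT: "b \<notin> T"
        proof
          assume "b \<in> T"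
          hence "stab g T" using stab_tr[OF sg'T aT] gg' by simp
          hence "T = S" using connD[OF cn TS _ sfT] aT by blast
          thus False using False connT by simp
        qed
        define T2 where "T2 = S - T"
        have bT2: "b \<in> T2" unfolding T2_def using bS bT by blast
        have sfT2: "stab f T2" unfolding T2_def using stab_diff[OF pf fin sf TS sfT] .
        have sg'T2: "stab g' T2" unfolding T2_def using stab_diff[OF pg' fin sg' TS sg'T] .
        have finT2: "finite T2" unfolding T2_def using fin by simp
        have connT2: "conn f g' T2"
          unfolding conn_def
        proof (intro allI impI)
          fix X assume XT: "X \<subseteq> T2" and Xne: "X \<noteq> {}" and sX: "stab f X" "stab g' X"
          show "X = T2"
          proof (cases "b \<in> X")
            case True
            have "stab g' (T \<union> X)" using stab_Un[OF sg'T sX(2)] .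
            hence "stab g (T \<union> X)" using stab_tr[of g' "T \<union> X" a b] aT True gg' by simp
            moreover have "stab f (T \<union> X)" using stab_Un[OF sfT sX(1)] .
            ultimately have "T \<union> X = S" using connD[OF cn _ _ _ _, of "T \<union> X"] TS XT aT unfolding T2_def by blast
            thus ?thesis using XT unfolding T2_def by blast
          next
            case False
            have aX: "a \<notin> X" using XT aT unfolding T2_def by blast
            have "stab g X" using sX(2) aX False gg' unfolding stab_def tr_def by auto
            moreover have "X \<subseteq> S" using XT unfolding T2_def by blast
            ultimately have "X = S" using connD[OF cn _ Xne sX(1)] by blast
            thus ?thesis using aX aS by blast
          qed
        qed
        have ST: "S = T \<union> T2" "T \<inter> T2 = {}" unfolding T2_def using TS by auto
        have cardS: "card S = card T + card T2" using ST fin finT finT2 card_Un_disjoint by metis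
        have cntS: "card (cyc h ` S) = card (cyc h ` T) + card (cyc h ` T2)"
          if "permutation h" "stab h T" "stab h T2" for h
          using cnt_Un[OF that(1) finT finT2 ST(2) that(2,3)] ST(1) by simp
        have cg'S: "card (cyc g' ` S) = card (cyc g' ` T) + card (cyc g' ` T2)"
          using cntS[OF pg' sg'T sg'T2] .
        have l1: "card (cyc g' ` T) \<le> card T" using cnt_le[OF finT] .
        have l2: "card (cyc g' ` T2) \<le> card T2" using cnt_le[OF finT2] .
        have NT: "card T - card (cyc g' ` T) < N" using Nlt cardS cg'S l1 l2 by linarith
        have NT2: "card T2 - card (cyc g' ` T2) < N" using Nlt cardS cg'S l1 l2 by linarith
        have IH1: "card (cyc f ` T) + card (cyc g' ` T) + card (cyc (f \<circ> g') ` T) \<le> card T + 2"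
          using less.IH[OF NT] pg' finT sfT sg'T connT by blast
        have IH2: "card (cyc f ` T2) + card (cyc g' ` T2) + card (cyc (f \<circ> g') ` T2) \<le> card T2 + 2"
          using less.IH[OF NT2] pg' finT2 sfT2 sg'T2 connT2 by blast
        have cfS: "card (cyc f ` S) = card (cyc f ` T) + card (cyc f ` T2)"
          using cntS[OF pf sfT sfT2] .
        have cfg'S: "card (cyc (f \<circ> g') ` S) = card (cyc (f \<circ> g') ` T) + card (cyc (f \<circ> g') ` T2)"
          using cntS[OF pfg' stab_comp[OF sfT sg'T] stab_comp[OF sfT2 sg'T2]] .
        have "cyc (f \<circ> g') a \<subseteq> T" using cyc_sub_stab[OF stab_comp[OF sfT sg'T] aT] .
        hence "b \<notin> cyc (f \<circ> g') a" using bT by blast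
        hence cfg2: "int (card (cyc (f \<circ> g) ` S)) = int (card (cyc (f \<circ> g') ` S)) - 1" using cfg by simp
        show ?thesis using cfg2 cg' cfS cfg'S cg'S IH1 IH2 cardS by linarith
      qed
    qed
  qed
qed

theorem RH:
  assumes "permutation f" "permutation g" "finite S" "stab f S" "stab g S" "conn f g S"
  shows "card (cyc f ` S) + card (cyc g ` S) + card (cyc (f \<circ> g) ` S) \<le> card S + 2"
  using RH_aux[OF assms(1)] assms by blast


definition zeta :: "nat \<Rightarrow> int \<Rightarrow> complex" where
  "zeta m k = cis (2 * pi * real_of_int k / real m)"

lemma zeta_add: "zeta m (k + l) = zeta m k * zeta m l"
  unfolding zeta_def cis_mult by (simp add: add_divide_distrib distrib_left)

lemma zeta_0[simp]: "zeta m 0 = 1" unfolding zeta_def by simp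

lemma zeta_eq_1: assumes "0 < m" shows "zeta m k = 1 \<longleftrightarrow> int m dvd k"
proof
  assume "zeta m k = 1"
  hence "cos (2 * pi * real_of_int k / real m) = 1" unfolding zeta_def
    by (metis cis.sel(1) one_complex.sel(1))
  then obtain q :: int where q: "2 * pi * real_of_int k / real m = real_of_int q * 2 * pi"
    using cos_one_2pi_int by blast
  hence "real_of_int k = real_of_int q * real m" using assms by (simp add: field_simps)
  hence "k = q * int m" by (metis of_int_eq_iff of_int_mult of_int_of_nat_eq)
  thus "int m dvd k" by simp
next
  assume "int m dvd k"
  then obtain q where "k = int m * q" by blast
  hence "2 * pi * real_of_int k / real m = 2 * pi * real_of_int q" using assms by simp
  thus "zeta m k = 1" unfolding zeta_def by simp
qed

lemma zeta_mod: assumes "0 < m" shows "zeta m (k mod int m) = zeta m k"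
proof -
  have "k = k mod int m + int m * (k div int m)" by simp
  hence "zeta m k = zeta m (k mod int m) * zeta m (int m * (k div int m))"
    by (metis zeta_add)
  moreover have "zeta m (int m * (k div int m)) = 1" using zeta_eq_1[OF assms] by simp
  ultimately show ?thesis by simp
qed

lemma sum_split_shift: "(\<Sum>l<p + (t::nat). f l) = (\<Sum>l<p. f l) + (\<Sum>l<t. f (p + l))"
  by (induct t) (simp_all add: add.assoc)

locale gel =
  fixes m n :: nat and x :: gelt
  assumes m0: "0 < m" and G: "in_G1 m n x"
begin

abbreviation "u \<equiv> fst x"
abbreviation "a \<equiv> snd x"

lemma pu: "u permutes {..<n}" using G unfolding in_G1_def by simp
lemma permu: "permutation u" by (rule permutes_imp_permutation[OF _ pu]) simp
lemma stabn: "stab u {..<n}" unfolding stab_def using permutes_in_image[OF pu] by simp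
lemma cyc_n: "y < n \<Longrightarrow> cyc u y \<subseteq> {..<n}" by (rule cyc_sub_stab[OF stabn]) simp
lemma pow_n: assumes "y < n" shows "(u ^^ k) y < n"
proof -
  have "(u ^^ k) y \<in> cyc u y" by (rule funpow_in_cyc)
  thus ?thesis using cyc_n[OF assms] by (meson lessThan_iff subsetD)
qed

definition S :: "nat \<Rightarrow> nat \<Rightarrow> int" where
  "S y k = (\<Sum>l<k. a ((u ^^ l) y))"

lemma S_Suc: "S y (Suc k) = S y k + a ((u ^^ k) y)" unfolding S_def by simp

lemma S_add: "S y (p + t) = S y p + S ((u ^^ p) y) t"
proof -
  have "(u ^^ (p + l)) y = (u ^^ l) ((u ^^ p) y)" for l
    by (simp add: funpow_add add.commute[of p l])
  thus ?thesis unfolding S_def sum_split_shift by simp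
qed

abbreviation "GM \<equiv> gmat m n x"

lemma M_carrier: "GM \<in> carrier_mat n n" unfolding gmat_def by simp

lemma mv: assumes v: "v \<in> carrier_vec n" and i: "i < n"
  shows "(GM *\<^sub>v v) $ i = zeta m (a (inv_into UNIV u i)) * v $ (inv_into UNIV u i)"
proof -
  have iu: "inv_into UNIV u i < n" using pu i by (metis permutes_inv permutes_in_image lessThan_iff)
  have Mij: "GM $$ (i, j) = (if j = inv_into UNIV u i then zeta m (a j) else 0)" if j: "j < n" for j
  proof -
    have e: "(i = u j) = (j = inv_into UNIV u i)" using permutes_inverses[OF pu] by metis
    have "GM $$ (i,j) = (if i = u j then zeta m (a j) else 0)" using i j by (simp add: gmat_def zeta_def)
    thus ?thesis unfolding e .
  qed
  have "(GM *\<^sub>v v) $ i = (\<Sum>j = 0..<n. GM $$ (i, j) * v $ j)"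
    using i v M_carrier by (simp add: scalar_prod_def)
  also have "\<dots> = (\<Sum>j = 0..<n. if j = inv_into UNIV u i then zeta m (a j) * v $ j else 0)"
    by (rule sum.cong) (simp_all add: Mij)
  also have "\<dots> = zeta m (a (inv_into UNIV u i)) * v $ (inv_into UNIV u i)" using iu by simp
  finally show ?thesis .
qed

lemma ker_iff: "v \<in> mat_kernel (GM - 1\<^sub>m n) \<longleftrightarrow>
    v \<in> carrier_vec n \<and> (\<forall>j<n. v $ (u j) = zeta m (a j) * v $ j)"
proof -
  have A: "GM - 1\<^sub>m n \<in> carrier_mat n n" using M_carrier by (intro minus_carrier_mat one_carrier_mat)
  have eqv: "(GM - 1\<^sub>m n) *\<^sub>v v = GM *\<^sub>v v - v" if v: "v \<in> carrier_vec n" for v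
  proof -
    have "(GM - 1\<^sub>m n) *\<^sub>v v = GM *\<^sub>v v - 1\<^sub>m n *\<^sub>v v"
      by (rule minus_mult_distrib_mat_vec[OF M_carrier one_carrier_mat v])
    also have "1\<^sub>m n *\<^sub>v v = v" by (rule one_mult_mat_vec[OF v])
    finally show ?thesis .
  qed
  have idx: "(GM *\<^sub>v v - v) $ i = (GM *\<^sub>v v) $ i - v $ i" if v: "v \<in> carrier_vec n" and i: "i < n" for v i
    using v i by (intro index_minus_vec(1)) simp
  show ?thesis
  proof
    assume vk: "v \<in> mat_kernel (GM - 1\<^sub>m n)"
    have v: "v \<in> carrier_vec n" using mat_kernelD(1)[OF A vk] .
    have z: "(GM - 1\<^sub>m n) *\<^sub>v v = 0\<^sub>v n" using mat_kernelD(2)[OF A vk] .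
    have "v $ (u j) = zeta m (a j) * v $ j" if j: "j < n" for j
    proof -
      have uj: "u j < n" using permutes_in_image[OF pu] j by simp
      have "(GM *\<^sub>v v - v) $ (u j) = 0\<^sub>v n $ (u j)" using z eqv[OF v] by simp
      also have "\<dots> = 0" using uj by simp
      finally have "(GM *\<^sub>v v) $ (u j) = v $ (u j)" using idx[OF v uj] by simp
      moreover have "inv_into UNIV u (u j) = j" using permutes_inverses(2)[OF pu] by simp
      ultimately show ?thesis using mv[OF v uj] by simp
    qed
    thus "v \<in> carrier_vec n \<and> (\<forall>j<n. v $ (u j) = zeta m (a j) * v $ j)" using v by simp
  next
    assume h: "v \<in> carrier_vec n \<and> (\<forall>j<n. v $ (u j) = zeta m (a j) * v $ j)"
    hence v: "v \<in> carrier_vec n" by simp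
    have "GM *\<^sub>v v - v = 0\<^sub>v n"
    proof (rule eq_vecI)
      show "dim_vec (GM *\<^sub>v v - v) = dim_vec (0\<^sub>v n)" using v by simp
      fix i assume "i < dim_vec (0\<^sub>v n)"
      hence i: "i < n" by simp
      have iu: "inv_into UNIV u i < n" using pu i by (metis permutes_inv permutes_in_image lessThan_iff)
      have ui: "u (inv_into UNIV u i) = i" using permutes_inverses(1)[OF pu] by simp
      have "v $ i = zeta m (a (inv_into UNIV u i)) * v $ (inv_into UNIV u i)"
        using h iu ui by metis
      thus "(GM *\<^sub>v v - v) $ i = 0\<^sub>v n $ i" using mv[OF v i] idx[OF v i] i by simp
    qed
    hence "(GM - 1\<^sub>m n) *\<^sub>v v = 0\<^sub>v n" using eqv[OF v] by simp
    thus "v \<in> mat_kernel (GM - 1\<^sub>m n)" by (rule mat_kernelI[OF A v])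
  qed
qed

lemma ker_pow: assumes K: "\<forall>j<n. v $ (u j) = zeta m (a j) * v $ j" and y: "y < n"
  shows "v $ ((u ^^ k) y) = zeta m (S y k) * v $ y"
proof (induct k)
  case 0 show ?case by (simp add: S_def)
next
  case (Suc k)
  have "v $ ((u ^^ Suc k) y) = zeta m (a ((u ^^ k) y)) * v $ ((u ^^ k) y)"
    using K pow_n[OF y] by simp
  also have "\<dots> = zeta m (S y (Suc k)) * v $ y" using Suc by (simp add: S_Suc zeta_add)
  finally show ?case .
qed

definition per :: "nat \<Rightarrow> nat" where "per y = funpow_dist1 u y y"

lemma per_prop: "(u ^^ per y) y = y"
  unfolding per_def by (rule funpow_dist1_prop[OF permutation_self_in_orbit[OF permu]])

lemma per_pos: "0 < per y" unfolding per_def by simp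

lemma cyc_per: "cyc u y = (\<lambda>l. (u ^^ l) y) ` {0..<per y}"
  unfolding per_def cyc_orbit[OF permu]
  by (rule orbit_conv_funpow_dist1[OF permutation_self_in_orbit[OF permu]])

lemma inj_per: "inj_on (\<lambda>l. (u ^^ l) y) {0..<per y}"
  unfolding per_def by (rule inj_on_funpow_dist1[OF permutation_self_in_orbit[OF permu]])

lemma cycsum: "(\<Sum>i\<in>cyc u y. a i) = S y (per y)"
  unfolding cyc_per S_def using sum.reindex[OF inj_per, of a] by (simp add: atLeast0LessThan)

lemma ret_sum: assumes w0: "wtset m a (cyc u y) = 0"
  shows "(u ^^ t) y = y \<Longrightarrow> zeta m (S y t) = 1"
proof (induction t rule: less_induct)
  case (less t)
  show ?case
  proof (cases "t = 0")
    case True thus ?thesis by (simp add: S_def)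
  next
    case False
    have le: "per y \<le> t" unfolding per_def
      by (rule funpow_dist1_le_self[OF less.prems]) (use False permutation_self_in_orbit[OF permu] in auto)
    define t' where "t' = t - per y"
    have tt: "t = per y + t'" using le t'_def by simp
    have "(u ^^ t') y = y"
    proof -
      have "(u ^^ t) y = (u ^^ t') ((u ^^ per y) y)" unfolding tt by (simp add: funpow_add add.commute)
      thus ?thesis using less.prems per_prop by simp
    qed
    hence IH: "zeta m (S y t') = 1" using less.IH[of t'] t'_def per_pos False by simp
    have "zeta m (S y (per y)) = 1" using w0 cycsum zeta_eq_1[OF m0] unfolding wtset_def
      by (metis dvd_eq_mod_eq_0)
    moreover have "S y t = S y (per y) + S y t'" unfolding tt S_add per_prop ..
    ultimately show ?thesis using IH by (simp add: zeta_add)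
  qed
qed

lemma zeta_S_eq: assumes w0: "wtset m a (cyc u y) = 0" and eq: "(u ^^ p) y = (u ^^ q) y"
  shows "zeta m (S y p) = zeta m (S y q)"
proof -
  have gen: "zeta m (S y p) = zeta m (S y q)" if pq: "p \<le> q" and eq: "(u ^^ p) y = (u ^^ q) y" for p q
  proof -
    define y' where "y' = (u ^^ p) y"
    have cy: "cyc u y' = cyc u y" unfolding y'_def by (rule cyc_eq[OF permu]) simp
    have "(u ^^ (q - p + p)) y = (u ^^ (q - p)) ((u ^^ p) y)" by (simp add: funpow_add)
    hence "(u ^^ (q - p)) y' = (u ^^ q) y" unfolding y'_def using pq by simp
    hence ret: "(u ^^ (q - p)) y' = y'" using eq y'_def by simp
    have "S y q = S y p + S y' (q - p)" using S_add[of y p "q - p"] pq y'_def by simp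
    moreover have "zeta m (S y' (q - p)) = 1" using ret_sum[of y' "q - p"] w0 cy ret by simp
    ultimately show ?thesis by (simp add: zeta_add)
  qed
  show ?thesis
  proof (cases "p \<le> q")
    case True show ?thesis using gen[OF True eq] by simp
  next
    case False
    hence "q \<le> p" by simp
    then show ?thesis using gen[OF _ eq[symmetric]] by simp
  qed
qed

lemma ker_zero: assumes K: "\<forall>j<n. v $ (u j) = zeta m (a j) * v $ j" and y: "y < n"
  and w: "wtset m a (cyc u y) \<noteq> 0"
  shows "v $ y = 0"
proof -
  have "v $ y = zeta m (S y (per y)) * v $ y" using ker_pow[OF K y, of "per y"] per_prop by simp
  moreover have "zeta m (S y (per y)) \<noteq> 1" using w cycsum zeta_eq_1[OF m0] unfolding wtset_def
    by (metis dvd_eq_mod_eq_0)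
  ultimately show ?thesis by (metis mult_cancel_right2)
qed

end


context gel
begin

definition Z :: "nat set set" where "Z = {C \<in> cycles n x. wtset m a C = 0}"

definition rep :: "nat set \<Rightarrow> nat" where "rep C = (SOME i. i \<in> C \<and> i < n)"

lemma rep_prop: assumes "C \<in> cycles n x"
  shows "rep C \<in> C" "rep C < n" "cyc u (rep C) = C"
proof -
  obtain i where i: "i < n" "C = cyc u i" using assms unfolding cycles_def cycles_on_def by auto
  have ex: "\<exists>j. j \<in> C \<and> j < n" using i self_in_cyc by blast
  have r: "rep C \<in> C \<and> rep C < n" unfolding rep_def by (rule someI_ex[OF ex])
  thus "rep C \<in> C" "rep C < n" by auto
  show "cyc u (rep C) = C" using r i cyc_eq[OF permu] by simp
qed

definition bv :: "nat set \<Rightarrow> complex vec" where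
  "bv C = vec n (\<lambda>i. if i \<in> C then zeta m (S (rep C) (funpow_dist u (rep C) i)) else 0)"

lemma bv_carrier: "bv C \<in> carrier_vec n" unfolding bv_def by simp

lemma bv_pow: assumes C: "C \<in> Z"
  shows "bv C $ ((u ^^ k) (rep C)) = zeta m (S (rep C) k)"
proof -
  let ?r = "rep C"
  have Cc: "C \<in> cycles n x" and w0: "wtset m a C = 0" using C unfolding Z_def by auto
  note rp = rep_prop[OF Cc]
  define i where "i = (u ^^ k) ?r"
  have iC: "i \<in> C" unfolding i_def using rp(3) funpow_in_cyc by metis
  have iN: "i < n" unfolding i_def using pow_n[OF rp(2)] .
  have io: "i \<in> orbit u ?r" using iC rp(3) cyc_orbit[OF permu] by simp
  have d: "(u ^^ funpow_dist u ?r i) ?r = (u ^^ k) ?r" using funpow_dist_prop[OF io] i_def by simp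
  have "bv C $ i = zeta m (S ?r (funpow_dist u ?r i))" unfolding bv_def using iC iN by simp
  also have "\<dots> = zeta m (S ?r k)" using zeta_S_eq[OF _ d] w0 rp(3) by simp
  finally show ?thesis unfolding i_def .
qed

lemma bv_rep: "C \<in> Z \<Longrightarrow> bv C $ (rep C) = 1"
  using bv_pow[of C 0] by (simp add: S_def)

lemma bv_out: "i \<notin> C \<Longrightarrow> i < n \<Longrightarrow> bv C $ i = 0"
  unfolding bv_def by simp

lemma bv_ker: assumes C: "C \<in> Z" shows "bv C \<in> mat_kernel (GM - 1\<^sub>m n)"
  unfolding ker_iff
proof (intro conjI allI impI)
  show "bv C \<in> carrier_vec n" by (rule bv_carrier)
  fix j assume j: "j < n"
  have Cc: "C \<in> cycles n x" using C unfolding Z_def by auto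
  note rp = rep_prop[OF Cc]
  have uj: "u j < n" using permutes_in_image[OF pu] j by simp
  show "bv C $ u j = zeta m (a j) * bv C $ j"
  proof (cases "j \<in> C")
    case True
    then obtain k where k: "j = (u ^^ k) (rep C)" using rp(3) unfolding cyc_def by auto
    have "u j = (u ^^ Suc k) (rep C)" using k by simp
    hence "bv C $ u j = bv C $ ((u ^^ Suc k) (rep C))" by simp
    also have "\<dots> = zeta m (S (rep C) (Suc k))" by (rule bv_pow[OF C])
    also have "\<dots> = zeta m (a j) * zeta m (S (rep C) k)" using k by (simp add: S_Suc zeta_add)
    also have "zeta m (S (rep C) k) = bv C $ j" using bv_pow[OF C, of k] k by simp
    finally show ?thesis .
  next
    case False
    have "u j \<notin> C"
    proof
      assume "u j \<in> C"
      hence "cyc u (u j) = C" using rp(3) cyc_eq[OF permu] by metis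
      moreover have "j \<in> cyc u (u j)" using cyc_sym[OF permu f_in_cyc[of u j]] .
      ultimately show False using False by simp
    qed
    thus ?thesis using bv_out False j uj by simp
  qed
qed

lemma finZ: "finite Z" unfolding Z_def cycles_def cycles_on_def by simp

lemma inj_bv: "inj_on bv Z"
proof (rule inj_onI)
  fix C D assume C: "C \<in> Z" and D: "D \<in> Z" and e: "bv C = bv D"
  have Cc: "C \<in> cycles n x" and Dc: "D \<in> cycles n x" using C D unfolding Z_def by auto
  have "bv D $ (rep C) = 1" using bv_rep[OF C] e by simp
  hence "rep C \<in> D" using bv_out[of "rep C" D] rep_prop(2)[OF Cc] by auto
  hence "cyc u (rep C) = D" using rep_prop(3)[OF Dc] cyc_eq[OF permu] by metis
  thus "C = D" using rep_prop(3)[OF Cc] by simp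
qed

lemma in_Z_cases: assumes i: "i < n"
  shows "cyc u i \<in> Z \<or> wtset m a (cyc u i) \<noteq> 0"
  using i unfolding Z_def cycles_def cycles_on_def by auto

lemma kernel_dim_eq: "kernel_dim (GM - 1\<^sub>m n) = card Z"
proof -
  have A: "GM - 1\<^sub>m n \<in> carrier_mat n n" using M_carrier by (intro minus_carrier_mat one_carrier_mat)
  interpret K: kernel n n "GM - 1\<^sub>m n" by (unfold_locales, rule A)
  let ?B = "bv ` Z"
  have sub: "?B \<subseteq> mat_kernel (GM - 1\<^sub>m n)" using bv_ker by blast
  have finB: "finite ?B" using finZ by simp
  have basis: "K.basis ?B"
    unfolding K.Ker.basis_def
  proof (intro conjI)
    show "?B \<subseteq> mat_kernel (GM - 1\<^sub>m n)" by (rule sub)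
    show "K.span ?B = mat_kernel (GM - 1\<^sub>m n)"
    proof
      show "K.span ?B \<subseteq> mat_kernel (GM - 1\<^sub>m n)" using sub by (rule K.Ker.span_is_subset2)
      show "mat_kernel (GM - 1\<^sub>m n) \<subseteq> K.span ?B"
      proof
        fix v assume vk: "v \<in> mat_kernel (GM - 1\<^sub>m n)"
        hence v: "v \<in> carrier_vec n" and K: "\<forall>j<n. v $ (u j) = zeta m (a j) * v $ j"
          using ker_iff by auto
        define co where "co = (\<lambda>w. v $ rep (the_inv_into Z bv w))"
        have co: "co (bv C) = v $ rep C" if "C \<in> Z" for C
          unfolding co_def using the_inv_into_f_f[OF inj_bv that] by simp
        have diml: "dim_vec (K.lincomb co ?B) = n"
          using K.Ker.lincomb_closed[OF sub] A unfolding mat_kernel_def by auto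
        have "v = K.lincomb co ?B"
        proof (rule eq_vecI)
          show "dim_vec v = dim_vec (K.lincomb co ?B)" using v diml by simp
          fix i assume "i < dim_vec (K.lincomb co ?B)"
          hence i: "i < n" using diml by simp
          have "K.lincomb co ?B $ i = (\<Sum>w\<in>?B. co w * w $ i)" by (rule K.lincomb_index[OF i sub])
          also have "\<dots> = (\<Sum>C\<in>Z. v $ rep C * bv C $ i)"
            by (subst sum.reindex[OF inj_bv]) (simp add: co)
          also have "\<dots> = v $ i"
          proof (cases "cyc u i \<in> Z")
            case True
            let ?C = "cyc u i"
            have "(\<Sum>C\<in>Z. v $ rep C * bv C $ i) = v $ rep ?C * bv ?C $ i + (\<Sum>C\<in>Z - {?C}. v $ rep C * bv C $ i)"
              by (rule sum.remove[OF finZ True])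
            also have "(\<Sum>C\<in>Z - {?C}. v $ rep C * bv C $ i) = 0"
            proof (rule sum.neutral, intro ballI)
              fix C assume CZ: "C \<in> Z - {?C}"
              have Cc: "C \<in> cycles n x" using CZ unfolding Z_def by auto
              have "i \<notin> C"
              proof
                assume "i \<in> C"
                hence "cyc u i = C" using rep_prop(3)[OF Cc] cyc_eq[OF permu] by metis
                thus False using CZ by simp
              qed
              thus "v $ rep C * bv C $ i = 0" using bv_out i by simp
            qed
            also have "v $ rep ?C * bv ?C $ i = v $ i"
            proof -
              have Cc: "?C \<in> cycles n x" using True unfolding Z_def by auto
              note rp = rep_prop[OF Cc]
              have "i \<in> cyc u (rep ?C)" using rp(3) by simp
              then obtain k where k: "i = (u ^^ k) (rep ?C)" unfolding cyc_def by auto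
              have "v $ i = zeta m (S (rep ?C) k) * v $ rep ?C"
                using ker_pow[OF K rp(2), of k] unfolding k[symmetric] .
              moreover have "bv ?C $ i = zeta m (S (rep ?C) k)"
                using bv_pow[OF True, of k] unfolding k[symmetric] .
              ultimately show ?thesis by simp
            qed
            finally show ?thesis by simp
          next
            case False
            hence w: "wtset m a (cyc u i) \<noteq> 0" using in_Z_cases[OF i] by blast
            have "(\<Sum>C\<in>Z. v $ rep C * bv C $ i) = 0"
            proof (rule sum.neutral, intro ballI)
              fix C assume CZ: "C \<in> Z"
              have Cc: "C \<in> cycles n x" using CZ unfolding Z_def by auto
              have "i \<notin> C"
              proof
                assume "i \<in> C"
                hence "cyc u i = C" using rep_prop(3)[OF Cc] cyc_eq[OF permu] by metis
                thus False using CZ False by simp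
              qed
              thus "v $ rep C * bv C $ i = 0" using bv_out i by simp
            qed
            thus ?thesis using ker_zero[OF K i w] by simp
          qed
          finally show "v $ i = K.lincomb co ?B $ i" by simp
        qed
        thus "v \<in> K.span ?B" unfolding K.Ker.span_def using finB by blast
      qed
    qed
    {
      fix co v
      assume lc: "K.lincomb co ?B = 0\<^sub>v n" and vB: "v \<in> ?B"
      then obtain C where CZ: "C \<in> Z" and vC: "v = bv C" by auto
      have Cc: "C \<in> cycles n x" using CZ unfolding Z_def by auto
      let ?r = "rep C"
      have r: "?r < n" using rep_prop(2)[OF Cc] .
      have "0 = K.lincomb co ?B $ ?r" using lc r by simp
      also have "\<dots> = (\<Sum>w\<in>?B. co w * w $ ?r)" by (rule K.lincomb_index[OF r sub])
      also have "\<dots> = co v * v $ ?r + (\<Sum>w\<in>?B - {v}. co w * w $ ?r)"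
        by (rule sum.remove[OF finB vB])
      also have "v $ ?r = 1" using vC bv_rep[OF CZ] by simp
      also have "(\<Sum>w\<in>?B - {v}. co w * w $ ?r) = 0"
      proof (rule sum.neutral, intro ballI)
        fix w assume wB: "w \<in> ?B - {v}"
        then obtain D where DZ: "D \<in> Z" and wD: "w = bv D" and DC: "D \<noteq> C" using vC by auto
        have Dc: "D \<in> cycles n x" using DZ unfolding Z_def by auto
        have "?r \<notin> D"
        proof
          assume "?r \<in> D"
          hence "cyc u ?r = D" using rep_prop(3)[OF Dc] cyc_eq[OF permu] by metis
          thus False using rep_prop(3)[OF Cc] DC by simp
        qed
        thus "co w * w $ ?r = 0" using wD bv_out r by simp
      qed
      finally have "co v = 0" by simp
    }
    thus "\<not> K.lin_dep ?B"
      by (intro K.Ker.finite_lin_indpt2[OF finB sub], auto simp: class_field_def)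
  qed
  have "kernel_dim (GM - 1\<^sub>m n) = K.dim" by simp
  also have "\<dots> = card ?B" using K.Ker.dim_basis[OF finB basis] .
  also have "\<dots> = card Z" using card_image[OF inj_bv] .
  finally show ?thesis .
qed

lemma codimfix_eq: "codimfix m n x = n - card {C \<in> cycles n x. wtset m (snd x) C = 0}"
  unfolding codimfix_def using kernel_dim_eq unfolding Z_def by simp

end


lemma decomp_card:
  assumes pf: "permutation f" and finP: "finite P" and st: "\<forall>B\<in>P. stab f (Sp B)"
    and fin: "\<forall>B\<in>P. finite (Sp B)"
    and dj: "\<forall>B1\<in>P. \<forall>B2\<in>P. B1 \<noteq> B2 \<longrightarrow> Sp B1 \<inter> Sp B2 = {}"
    and un: "\<Union>(Sp ` P) = A"
  shows "card {C \<in> cyc f ` A. Q C} = (\<Sum>B\<in>P. card {C \<in> cyc f ` Sp B. Q C})"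
proof -
  have eq: "{C \<in> cyc f ` A. Q C} = (\<Union>B\<in>P. {C \<in> cyc f ` Sp B. Q C})" using un by blast
  have "card (\<Union>B\<in>P. {C \<in> cyc f ` Sp B. Q C}) = (\<Sum>B\<in>P. card {C \<in> cyc f ` Sp B. Q C})"
  proof (rule card_UN_disjoint[OF finP])
    show "\<forall>B\<in>P. finite {C \<in> cyc f ` Sp B. Q C}" using fin by simp
    show "\<forall>B1\<in>P. \<forall>B2\<in>P. B1 \<noteq> B2 \<longrightarrow> {C \<in> cyc f ` Sp B1. Q C} \<inter> {C \<in> cyc f ` Sp B2. Q C} = {}"
    proof (intro ballI impI)
      fix B1 B2 assume B: "B1 \<in> P" "B2 \<in> P" "B1 \<noteq> B2"
      show "{C \<in> cyc f ` Sp B1. Q C} \<inter> {C \<in> cyc f ` Sp B2. Q C} = {}"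
      proof (rule ccontr)
        assume "{C \<in> cyc f ` Sp B1. Q C} \<inter> {C \<in> cyc f ` Sp B2. Q C} \<noteq> {}"
        then obtain y1 y2 where y: "y1 \<in> Sp B1" "y2 \<in> Sp B2" "cyc f y1 = cyc f y2" by auto
        have "cyc f y1 \<subseteq> Sp B1" using cyc_sub_stab st B(1) y(1) by blast
        moreover have "cyc f y2 \<subseteq> Sp B2" using cyc_sub_stab st B(2) y(2) by blast
        ultimately have "y1 \<in> Sp B1 \<inter> Sp B2" using y(3) self_in_cyc[of y1 f] by auto
        thus False using dj B by blast
      qed
    qed
  qed
  thus ?thesis using eq by simp
qed

lemma decomp_card_set:
  assumes finP: "finite P" and fin: "\<forall>B\<in>P. finite (Sp B)"
    and dj: "\<forall>B1\<in>P. \<forall>B2\<in>P. B1 \<noteq> B2 \<longrightarrow> Sp B1 \<inter> Sp B2 = {}"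
    and un: "\<Union>(Sp ` P) = A"
  shows "card A = (\<Sum>B\<in>P. card (Sp B))"
  using card_UN_disjoint[OF finP, of Sp] fin dj un by simp

locale setting =
  fixes m p n :: nat and u w :: gelt
  assumes m0: "0 < m" and Gu: "in_G m p n u" and Gw: "in_G m p n w"
begin

abbreviation "U \<equiv> fst u"
abbreviation "W \<equiv> fst w"
definition v where "v = gmult m (ginv m u) w"
abbreviation "V \<equiv> fst v"
definition R where "R = Pi_rel n u w"
definition P where "P = Pi_part n u w"
abbreviation "cw \<equiv> cycles n w"

lemma G1u: "in_G1 m n u" using Gu unfolding in_G_def by simp
lemma G1w: "in_G1 m n w" using Gw unfolding in_G_def by simp
lemma pU: "U permutes {..<n}" using G1u unfolding in_G1_def by simp
lemma pW: "W permutes {..<n}" using G1w unfolding in_G1_def by simp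
lemma permU: "permutation U" by (rule permutes_imp_permutation[OF _ pU]) simp
lemma permW: "permutation W" by (rule permutes_imp_permutation[OF _ pW]) simp

lemma V_eq: "V = inv_into UNIV U \<circ> W"
  unfolding v_def gmult_def ginv_def by simp

lemma pV: "V permutes {..<n}"
  unfolding V_eq by (rule permutes_compose[OF pW permutes_inv[OF pU]])
lemma permV: "permutation V" by (rule permutes_imp_permutation[OF _ pV]) simp

lemma UV: "U \<circ> V = W"
  unfolding V_eq using permutes_inverses(1)[OF pU] by (simp add: fun_eq_iff)

lemma snd_v: "snd v i = (snd w i + (- snd u (V i)) mod int m) mod int m"
  unfolding v_def gmult_def ginv_def by simp

lemma snd_v_mod: "snd v i mod int m = (snd w i - snd u (V i)) mod int m"
  unfolding snd_v by (simp add: mod_add_right_eq)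

lemma G1v: "in_G1 m n v"
  unfolding in_G1_def
proof (intro conjI allI impI)
  show "V permutes {..<n}" by (rule pV)
  fix i
  show "0 \<le> snd v i" "snd v i < int m" unfolding snd_v using m0 by simp_all
next
  fix i :: nat assume i: "n \<le> i"
  have Wi: "W i = i" using permutes_not_in[OF pW] i by simp
  have Vi: "V i = i" using permutes_not_in[OF pV] i by simp
  have "snd w i = 0" using G1w i unfolding in_G1_def by simp
  moreover have "snd u i = 0" using G1u i unfolding in_G1_def by simp
  ultimately show "snd v i = 0" unfolding snd_v using Vi by simp
qed

lemma stabU: "stab U {..<n}" unfolding stab_def using permutes_in_image[OF pU] by simp
lemma stabW: "stab W {..<n}" unfolding stab_def using permutes_in_image[OF pW] by simp
lemma stabV: "stab V {..<n}" unfolding stab_def using permutes_in_image[OF pV] by simp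

lemma R_sub: "R \<subseteq> cw \<times> cw" unfolding R_def Pi_rel_def by auto

lemma equivR: "equiv cw (R\<^sup>+)"
proof (rule equivI)
  show "R\<^sup>+ \<subseteq> cw \<times> cw" using R_sub trancl_subset_Sigma by blast
  show "refl_on cw (R\<^sup>+)"
  proof (rule refl_onI)
    fix C assume C: "C \<in> cw"
    then obtain i where i: "i < n" "C = cyc W i" unfolding cycles_def cycles_on_def by auto
    have "cyc U i \<in> cycles n u" using i unfolding cycles_def cycles_on_def by auto
    hence "(C, C) \<in> R" unfolding R_def Pi_rel_def using C i self_in_cyc[of i] by blast
    thus "(C, C) \<in> R\<^sup>+" by blast
  qed
  show "sym (R\<^sup>+)" by (rule sym_trancl) (auto simp: sym_def R_def Pi_rel_def)
  show "trans (R\<^sup>+)" by (rule trans_trancl)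
qed

lemma finite_cw: "finite cw" unfolding cycles_def cycles_on_def by simp
lemma finP: "finite P" unfolding P_def Pi_part_def R_def[symmetric]
  using finite_cw by (metis finite_Pow_iff finite_subset Union_quotient[OF equivR] Pow_UNIV
      Sup_le_iff  subset_UNIV Pow_iff subsetI)

lemma class_closed: assumes B: "B \<in> P" and C: "C \<in> B" and CC: "(C, C') \<in> R\<^sup>+" shows "C' \<in> B"
proof -
  from B obtain c where Bc: "B = R\<^sup>+ `` {c}" unfolding P_def Pi_part_def R_def[symmetric]
    by (auto elim: quotientE)
  hence "(c, C) \<in> R\<^sup>+" using C by simp
  hence "(c, C') \<in> R\<^sup>+" using CC by (meson trancl_trans)
  thus ?thesis using Bc by simp
qed

lemma B_sub: "B \<in> P \<Longrightarrow> B \<subseteq> cw"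
  unfolding P_def Pi_part_def R_def[symmetric] using in_quotient_imp_subset[OF equivR] by blast

lemma cw_cyc: "C \<in> cw \<Longrightarrow> x \<in> C \<Longrightarrow> C = cyc W x \<and> x < n"
proof -
  assume C: "C \<in> cw" and x: "x \<in> C"
  then obtain i where i: "i < n" "C = cyc W i" unfolding cycles_def cycles_on_def by auto
  hence "cyc W x = C" using cyc_eq[OF permW] x by metis
  moreover have "x < n" using cyc_sub_stab[OF stabW] i x by blast
  ultimately show ?thesis by simp
qed

lemma Supp_sub: "B \<in> P \<Longrightarrow> Supp B \<subseteq> {..<n}"
  unfolding Supp_def using B_sub cw_cyc by fastforce

lemma fin_Supp: "B \<in> P \<Longrightarrow> finite (Supp B)"
  using Supp_sub finite_subset by blast

lemma stab_Supp_W: assumes "B \<in> P" shows "stab W (Supp B)"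
  unfolding stab_def Supp_def
proof
  fix y assume "y \<in> \<Union>B"
  then obtain C where C: "C \<in> B" "y \<in> C" by auto
  hence "C = cyc W y" using cw_cyc B_sub assms by blast
  hence "W y \<in> C" by simp
  thus "W y \<in> \<Union>B" using C by blast
qed

lemma stab_Supp_U: assumes B: "B \<in> P" shows "stab U (Supp B)"
  unfolding stab_def Supp_def
proof
  fix y assume "y \<in> \<Union>B"
  then obtain C where C: "C \<in> B" "y \<in> C" by auto
  have Cw: "C \<in> cw" using C B_sub B by blast
  have yn: "y < n" using cw_cyc[OF Cw C(2)] by simp
  have Uy: "U y < n" using permutes_in_image[OF pU] yn by simp
  define C' where "C' = cyc W (U y)"
  have C'w: "C' \<in> cw" unfolding C'_def cycles_def cycles_on_def using Uy by simp
  have D: "cyc U y \<in> cycles n u" unfolding cycles_def cycles_on_def using yn by simp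
  have i1: "cyc U y \<inter> C \<noteq> {}" using C(2) self_in_cyc[of y U] by blast
  have i2: "cyc U y \<inter> C' \<noteq> {}" unfolding C'_def using self_in_cyc[of "U y" W] f_in_cyc[of U y] by blast
  have "\<exists>D\<in>cycles n u. D \<inter> C \<noteq> {} \<and> D \<inter> C' \<noteq> {}" using D i1 i2 by blast
  hence "(C, C') \<in> R" unfolding R_def Pi_rel_def using Cw C'w by simp
  hence "C' \<in> B" using class_closed[OF B C(1)] by blast
  thus "U y \<in> \<Union>B" unfolding C'_def using self_in_cyc by blast
qed

lemma stab_Supp_V: assumes B: "B \<in> P" shows "stab V (Supp B)"
proof -
  have img: "U ` Supp B = Supp B" using stab_image_eq[OF permU fin_Supp[OF B] stab_Supp_U[OF B]] .
  show ?thesis unfolding stab_def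
  proof
    fix y assume y: "y \<in> Supp B"
    have "W y \<in> Supp B" using stab_Supp_W[OF B] y unfolding stab_def by blast
    then obtain z where z: "z \<in> Supp B" "W y = U z" using img by (metis imageE)
    have "V y = z" unfolding V_eq using z permutes_inverses(2)[OF pU] by simp
    thus "V y \<in> Supp B" using z by simp
  qed
qed

lemma Supp_disj: assumes "B1 \<in> P" "B2 \<in> P" "B1 \<noteq> B2" shows "Supp B1 \<inter> Supp B2 = {}"
proof (rule ccontr)
  assume "Supp B1 \<inter> Supp B2 \<noteq> {}"
  then obtain y C1 C2 where y: "C1 \<in> B1" "C2 \<in> B2" "y \<in> C1" "y \<in> C2" unfolding Supp_def by auto
  have "C1 = cyc W y" using cw_cyc B_sub assms(1) y by blast
  moreover have "C2 = cyc W y" using cw_cyc B_sub assms(2) y by blast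
  ultimately have "B1 \<inter> B2 \<noteq> {}" using y by auto
  thus False using quotient_disj[OF equivR] assms unfolding P_def Pi_part_def R_def[symmetric] by blast
qed

lemma Supp_Un: "\<Union>(Supp ` P) = {..<n}"
proof
  show "\<Union>(Supp ` P) \<subseteq> {..<n}" using Supp_sub by blast
  show "{..<n} \<subseteq> \<Union>(Supp ` P)"
  proof
    fix i assume "i \<in> {..<n}"
    hence "cyc W i \<in> cw" unfolding cycles_def cycles_on_def by simp
    hence "cyc W i \<in> \<Union>P" using Union_quotient[OF equivR] unfolding P_def Pi_part_def R_def[symmetric] by simp
    then obtain B where "B \<in> P" "cyc W i \<in> B" by auto
    thus "i \<in> \<Union>(Supp ` P)" unfolding Supp_def using self_in_cyc[of i W] by blast
  qed
qed

lemma conn_Supp: assumes B: "B \<in> P" shows "conn U V (Supp B)"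
  unfolding conn_def
proof (intro allI impI)
  fix T assume TS: "T \<subseteq> Supp B" and Tne: "T \<noteq> {}" and sU: "stab U T" and sV: "stab V T"
  have sW: "stab W T" using stab_comp[OF sU sV] UV by simp
  obtain t where t: "t \<in> T" using Tne by blast
  obtain C0 where C0: "C0 \<in> B" "t \<in> C0" using TS t unfolding Supp_def by blast
  have C0w: "C0 = cyc W t" using cw_cyc B_sub B C0 by blast
  have C0T: "C0 \<subseteq> T" using cyc_sub_stab[OF sW t] C0w by simp
  have stepR: "C' \<subseteq> T" if "C \<subseteq> T" "(C, C') \<in> R" for C C'
  proof -
    from that(2) obtain D y z where D: "D \<in> cycles n u" "y \<in> D" "y \<in> C" "z \<in> D" "z \<in> C'" "C' \<in> cw"
      unfolding R_def Pi_rel_def by blast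
    obtain d where d: "D = cyc U d" using D(1) unfolding cycles_def cycles_on_def by auto
    have "D = cyc U y" using d D(2) cyc_eq[OF permU] by metis
    hence "D \<subseteq> T" using cyc_sub_stab[OF sU] that(1) D(3) by blast
    hence zT: "z \<in> T" using D(4) by blast
    have "C' = cyc W z" using cw_cyc[OF D(6) D(5)] by simp
    thus ?thesis using cyc_sub_stab[OF sW zT] by simp
  qed
  have all: "C \<subseteq> T" if "(C0, C) \<in> R\<^sup>+" for C
    using that
  proof (induct rule: trancl_induct)
    case (base y) thus ?case using stepR[OF C0T] by blast
  next
    case (step y z) thus ?case using stepR by blast
  qed
  have "C \<subseteq> T" if C: "C \<in> B" for C
  proof -
    from B obtain c where Bc: "B = R\<^sup>+ `` {c}" unfolding P_def Pi_part_def R_def[symmetric]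
      by (auto elim: quotientE)
    have "(c, C0) \<in> R\<^sup>+" "(c, C) \<in> R\<^sup>+" using Bc C0(1) C by auto
    have "sym (R\<^sup>+)" using equivR unfolding equiv_def by simp
    hence "(C0, c) \<in> R\<^sup>+" using \<open>(c, C0) \<in> R\<^sup>+\<close> unfolding sym_def by simp
    hence "(C0, C) \<in> R\<^sup>+" using \<open>(c, C) \<in> R\<^sup>+\<close> by (meson trancl_trans)
    thus ?thesis by (rule all)
  qed
  hence "Supp B \<subseteq> T" unfolding Supp_def by blast
  thus "T = Supp B" using TS by blast
qed

end

lemma wt_cycles:
  assumes "permutation f" "finite S" "stab f S" "0 < m"
  shows "wtset m a S = (\<Sum>C\<in>cyc f ` S. wtset m a C) mod int m"
proof -
  have "wtset m a S = (\<Sum>C\<in>cyc f ` S. \<Sum>i\<in>C. a i) mod int m"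
    unfolding wtset_def using sum_over_cycles[OF assms(1-3), of a] by simp
  also have "\<dots> = (\<Sum>C\<in>cyc f ` S. (\<Sum>i\<in>C. a i) mod int m) mod int m"
    by (simp add: mod_sum_eq)
  finally show ?thesis unfolding wtset_def .
qed

lemma wt_allzero:
  assumes "permutation f" "finite S" "stab f S" "0 < m" "\<forall>C\<in>cyc f ` S. wtset m a C = 0"
  shows "wtset m a S = 0"
  using wt_cycles[OF assms(1-4), of a] assms(5) by simp

lemma wt_onenz:
  assumes "permutation f" "finite S" "stab f S" "0 < m" "C0 \<in> cyc f ` S"
    "\<forall>C\<in>cyc f ` S. C \<noteq> C0 \<longrightarrow> wtset m a C = 0"
  shows "wtset m a S = wtset m a C0"
proof -
  have "(\<Sum>C\<in>cyc f ` S. wtset m a C) = wtset m a C0 + (\<Sum>C\<in>cyc f ` S - {C0}. wtset m a C)"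
    using assms(2,5) by (simp add: sum.remove)
  also have "(\<Sum>C\<in>cyc f ` S - {C0}. wtset m a C) = 0" using assms(6) by (intro sum.neutral) auto
  finally show ?thesis using wt_cycles[OF assms(1-4), of a] unfolding wtset_def by simp
qed

lemma card_split: assumes "finite A" shows "card A = card {C \<in> A. Q C} + card {C \<in> A. \<not> Q C}"
proof -
  have e: "A = {C \<in> A. Q C} \<union> {C \<in> A. \<not> Q C}" by auto
  have "card ({C \<in> A. Q C} \<union> {C \<in> A. \<not> Q C}) = card {C \<in> A. Q C} + card {C \<in> A. \<not> Q C}"
    by (rule card_Un_disjoint) (use assms in auto)
  thus ?thesis using e by simp
qed

context setting
begin

lemma wsum: assumes B: "B \<in> P"
  shows "wtset m (snd w) (Supp B) = (wtset m (snd u) (Supp B) + wtset m (snd v) (Supp B)) mod int m"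
proof -
  let ?S = "Supp B"
  have fin: "finite ?S" using fin_Supp[OF B] .
  have img: "V ` ?S = ?S" using stab_image_eq[OF permV fin stab_Supp_V[OF B]] .
  have inj: "inj_on V ?S" by (rule inj_on_subset[OF bij_is_inj[OF permutation_bijective[OF permV]]]) simp
  have re: "(\<Sum>i\<in>?S. snd u (V i)) = (\<Sum>i\<in>?S. snd u i)"
    using sum.reindex[OF inj, of "snd u"] img by simp
  have "(\<Sum>i\<in>?S. snd v i) mod int m = (\<Sum>i\<in>?S. snd v i mod int m) mod int m"
    by (simp add: mod_sum_eq)
  also have "\<dots> = (\<Sum>i\<in>?S. (snd w i - snd u (V i)) mod int m) mod int m"
    using snd_v_mod by simp
  also have "\<dots> = (\<Sum>i\<in>?S. (snd w i - snd u (V i))) mod int m" by (simp add: mod_sum_eq)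
  also have "\<dots> = ((\<Sum>i\<in>?S. snd w i) - (\<Sum>i\<in>?S. snd u i)) mod int m"
    using re by (simp add: sum_subtractf)
  finally have hv: "(\<Sum>i\<in>?S. snd v i) mod int m = ((\<Sum>i\<in>?S. snd w i) - (\<Sum>i\<in>?S. snd u i)) mod int m" .
  have "(wtset m (snd u) ?S + wtset m (snd v) ?S) mod int m
      = ((\<Sum>i\<in>?S. snd u i) + (\<Sum>i\<in>?S. snd v i)) mod int m"
    unfolding wtset_def by (simp add: mod_add_eq)
  also have "\<dots> = ((\<Sum>i\<in>?S. snd u i) + (\<Sum>i\<in>?S. snd v i) mod int m) mod int m"
    by (simp add: mod_add_right_eq)
  also have "\<dots> = ((\<Sum>i\<in>?S. snd u i) + ((\<Sum>i\<in>?S. snd w i) - (\<Sum>i\<in>?S. snd u i)) mod int m) mod int m"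
    using hv by simp
  also have "\<dots> = (\<Sum>i\<in>?S. snd w i) mod int m" by (simp add: mod_add_right_eq)
  finally show ?thesis unfolding wtset_def by simp
qed

definition ZU where "ZU S = {C \<in> cyc U ` S. wtset m (snd u) C = 0}"
definition NU where "NU S = {C \<in> cyc U ` S. wtset m (snd u) C \<noteq> 0}"
definition ZV where "ZV S = {C \<in> cyc V ` S. wtset m (snd v) C = 0}"
definition NV where "NV S = {C \<in> cyc V ` S. wtset m (snd v) C \<noteq> 0}"
definition nz where "nz S = (if wtset m (snd w) S \<noteq> 0 then 1 else 0 :: int)"

lemma splitU: "finite S \<Longrightarrow> card (cyc U ` S) = card (ZU S) + card (NU S)"
  unfolding ZU_def NU_def by (rule card_split) simp
lemma splitV: "finite S \<Longrightarrow> card (cyc V ` S) = card (ZV S) + card (NV S)"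
  unfolding ZV_def NV_def by (rule card_split) simp

lemma block_RH: assumes B: "B \<in> P"
  shows "card (cyc U ` Supp B) + card (cyc V ` Supp B) + card (cyc W ` Supp B) \<le> card (Supp B) + 2"
  using RH[OF permU permV fin_Supp[OF B] stab_Supp_U[OF B] stab_Supp_V[OF B] conn_Supp[OF B]] UV
  by simp

lemma block_nz: assumes B: "B \<in> P" and nz: "wtset m (snd w) (Supp B) \<noteq> 0"
  shows "card (NU (Supp B)) + card (NV (Supp B)) \<ge> 1"
proof (rule ccontr)
  let ?S = "Supp B"
  assume "\<not> ?thesis"
  hence c: "card (NU ?S) = 0" "card (NV ?S) = 0" by auto
  have f: "finite (NU ?S)" "finite (NV ?S)" using fin_Supp[OF B] by (auto simp: NU_def NV_def)
  have e: "NU ?S = {}" "NV ?S = {}" using c f by auto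
  have "wtset m (snd u) ?S = 0"
    using wt_allzero[OF permU fin_Supp[OF B] stab_Supp_U[OF B] m0] e(1) unfolding NU_def by blast
  moreover have "wtset m (snd v) ?S = 0"
    using wt_allzero[OF permV fin_Supp[OF B] stab_Supp_V[OF B] m0] e(2) unfolding NV_def by blast
  ultimately show False using wsum[OF B] nz by simp
qed

end

context setting
begin

definition "cU B = card (cyc U ` Supp B)"
definition "cV B = card (cyc V ` Supp B)"
definition "cW B = card (cyc W ` Supp B)"
definition "d1 B = int (card (Supp B)) + 2 - int (cU B) - int (cV B) - int (cW B)"
definition "d2 B = int (cU B) + int (cV B) - int (card (ZU (Supp B))) - int (card (ZV (Supp B))) - nz (Supp B)"

lemma d1_nonneg: "B \<in> P \<Longrightarrow> d1 B \<ge> 0"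
  using block_RH unfolding d1_def cU_def cV_def cW_def by fastforce

lemma d2_nonneg: assumes B: "B \<in> P" shows "d2 B \<ge> 0"
proof -
  have f: "finite (Supp B)" using fin_Supp[OF B] .
  show ?thesis
  proof (cases "wtset m (snd w) (Supp B) \<noteq> 0")
    case True
    thus ?thesis using block_nz[OF B True] splitU[OF f] splitV[OF f]
      unfolding d2_def cU_def cV_def nz_def by simp
  next
    case False
    thus ?thesis using splitU[OF f] splitV[OF f] unfolding d2_def cU_def cV_def nz_def by simp
  qed
qed

lemma gel_u: "gel m n u" by unfold_locales (use m0 G1u in auto)
lemma gel_v: "gel m n v" by unfold_locales (use m0 G1v in auto)

lemma cnt_le_n: "card {C \<in> cyc f ` {..<n}. Q C} \<le> n"
proof -
  have "card {C \<in> cyc f ` {..<n}. Q C} \<le> card (cyc f ` {..<n})" by (rule card_mono) auto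
  also have "\<dots> \<le> n" using card_image_le[of "{..<n}" "cyc f"] by simp
  finally show ?thesis .
qed

lemma decomp_f: assumes "permutation f" "\<forall>B\<in>P. stab f (Supp B)"
  shows "card {C \<in> cyc f ` {..<n}. Q C} = (\<Sum>B\<in>P. card {C \<in> cyc f ` Supp B. Q C})"
  by (rule decomp_card[OF assms(1) finP assms(2)]) (use fin_Supp Supp_disj Supp_Un in auto)

lemma codim_u: "int (codimfix m n u) = int n - (\<Sum>B\<in>P. int (card (ZU (Supp B))))"
proof -
  have "codimfix m n u = n - card {C \<in> cyc U ` {..<n}. wtset m (snd u) C = 0}"
    using gel.codimfix_eq[OF gel_u] unfolding cycles_def cycles_on_def .
  moreover have "card {C \<in> cyc U ` {..<n}. wtset m (snd u) C = 0} = (\<Sum>B\<in>P. card (ZU (Supp B)))"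
    unfolding ZU_def by (rule decomp_f[OF permU]) (use stab_Supp_U in auto)
  moreover note cnt_le_n[of U "\<lambda>C. wtset m (snd u) C = 0"]
  ultimately show ?thesis by (simp add: of_nat_diff)
qed

lemma codim_v: "int (codimfix m n v) = int n - (\<Sum>B\<in>P. int (card (ZV (Supp B))))"
proof -
  have "codimfix m n v = n - card {C \<in> cyc V ` {..<n}. wtset m (snd v) C = 0}"
    using gel.codimfix_eq[OF gel_v] unfolding cycles_def cycles_on_def .
  moreover have "card {C \<in> cyc V ` {..<n}. wtset m (snd v) C = 0} = (\<Sum>B\<in>P. card (ZV (Supp B)))"
    unfolding ZV_def by (rule decomp_f[OF permV]) (use stab_Supp_V in auto)
  moreover note cnt_le_n[of V "\<lambda>C. wtset m (snd v) C = 0"]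
  ultimately show ?thesis by (simp add: of_nat_diff)
qed

lemma n_sum: "int n = (\<Sum>B\<in>P. int (card (Supp B)))"
proof -
  have "card {..<n} = (\<Sum>B\<in>P. card (Supp B))"
    by (rule decomp_card_set[OF finP]) (use fin_Supp Supp_disj Supp_Un in auto)
  hence "int n = int (\<Sum>B\<in>P. card (Supp B))" by simp
  thus ?thesis by (simp add: of_nat_sum)
qed

lemma cw_sum: "int (card cw) = (\<Sum>B\<in>P. int (cW B))"
proof -
  have "card {C \<in> cyc W ` {..<n}. True} = (\<Sum>B\<in>P. card {C \<in> cyc W ` Supp B. True})"
    by (rule decomp_f[OF permW]) (use stab_Supp_W in auto)
  thus ?thesis unfolding cW_def cycles_def cycles_on_def by simp
qed

lemma nz_sum: "int (card {B \<in> P. wtset m (snd w) (Supp B) \<noteq> 0}) = (\<Sum>B\<in>P. nz (Supp B))"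
proof -
  have "(\<Sum>B\<in>P. nz (Supp B)) = (\<Sum>B\<in>P. if wtset m (snd w) (Supp B) \<noteq> 0 then 1 else 0)"
    unfolding nz_def by simp
  also have "\<dots> = (\<Sum>B\<in>{B \<in> P. wtset m (snd w) (Supp B) \<noteq> 0}. 1)"
    using sum.inter_filter[OF finP, of "\<lambda>_. 1::int"] by simp
  finally show ?thesis by simp
qed

lemma key: "int (codimfix m n u) + int (codimfix m n v)
   - (int n + int (card cw) - 2 * int (card P) + int (card {B \<in> P. wtset m (snd w) (Supp B) \<noteq> 0}))
   = (\<Sum>B\<in>P. d1 B + d2 B)"
proof -
  have cP: "int (card P) = (\<Sum>B\<in>P. 1)" by simp
  show ?thesis
    unfolding codim_u codim_v cw_sum nz_sum cP
    apply (subst (1 2 3) n_sum)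
    by (simp add: d1_def d2_def sum.distrib sum_subtractf sum_distrib_left algebra_simps)
qed

lemma block_final:
  assumes B: "B \<in> P" and z1: "d1 B = 0" and z2: "d2 B = 0"
  shows "int (card (cycles_on u (Supp B))) + int (card (cycles_on v (Supp B)))
           = int (card (Supp B)) - int (card (cycles_on w (Supp B))) + 2
      \<and> (let S = Supp B; WW = wtset m (snd w) S;
             c1 = (WW = 0 \<and> (\<forall>C\<in>cycles_on u S. wtset m (snd u) C = 0)
                       \<and> (\<forall>C\<in>cycles_on v S. wtset m (snd v) C = 0));
             c2 = (wtset m (snd u) S = WW \<and> WW \<noteq> 0
                       \<and> (\<exists>C\<in>cycles_on u S. wtset m (snd u) C = WW
                            \<and> (\<forall>C'\<in>cycles_on u S. C' \<noteq> C \<longrightarrow> wtset m (snd u) C' = 0))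
                       \<and> (\<forall>C\<in>cycles_on v S. wtset m (snd v) C = 0));
             c3 = (wtset m (snd v) S = WW \<and> WW \<noteq> 0
                       \<and> (\<exists>C\<in>cycles_on v S. wtset m (snd v) C = WW
                            \<and> (\<forall>C'\<in>cycles_on v S. C' \<noteq> C \<longrightarrow> wtset m (snd v) C' = 0))
                       \<and> (\<forall>C\<in>cycles_on u S. wtset m (snd u) C = 0))
           in ((c1 \<and> \<not> c2 \<and> \<not> c3) \<or> (\<not> c1 \<and> c2 \<and> \<not> c3) \<or> (\<not> c1 \<and> \<not> c2 \<and> c3)))"
proof -
  define S where "S = Supp B"
  define WW where "WW = wtset m (snd w) S"
  have f: "finite S" unfolding S_def using fin_Supp[OF B] .
  have sU: "stab U S" and sV: "stab V S" unfolding S_def using stab_Supp_U[OF B] stab_Supp_V[OF B] by auto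
  have cu: "cycles_on u S = cyc U ` S" and cv: "cycles_on v S = cyc V ` S" and cwS: "cycles_on w S = cyc W ` S"
    unfolding cycles_on_def by auto
  have part1: "int (card (cycles_on u S)) + int (card (cycles_on v S)) = int (card S) - int (card (cycles_on w S)) + 2"
    using z1 unfolding d1_def cU_def cV_def cW_def cycles_on_def S_def by simp
  have cnt: "int (card (NU S)) + int (card (NV S)) = nz S"
    using z2 splitU[OF f] splitV[OF f] unfolding d2_def cU_def cV_def S_def by simp
  have finN: "finite (NU S)" "finite (NV S)" using f unfolding NU_def NV_def by auto
  have ws: "WW = (wtset m (snd u) S + wtset m (snd v) S) mod int m" unfolding WW_def S_def using wsum[OF B] .
  have wmod: "wtset m a X mod int m = wtset m a X" for a X unfolding wtset_def by simp
  let ?c1 = "WW = 0 \<and> (\<forall>C\<in>cycles_on u S. wtset m (snd u) C = 0) \<and> (\<forall>C\<in>cycles_on v S. wtset m (snd v) C = 0)"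
  let ?c2 = "wtset m (snd u) S = WW \<and> WW \<noteq> 0
                       \<and> (\<exists>C\<in>cycles_on u S. wtset m (snd u) C = WW
                            \<and> (\<forall>C'\<in>cycles_on u S. C' \<noteq> C \<longrightarrow> wtset m (snd u) C' = 0))
                       \<and> (\<forall>C\<in>cycles_on v S. wtset m (snd v) C = 0)"
  let ?c3 = "wtset m (snd v) S = WW \<and> WW \<noteq> 0
                       \<and> (\<exists>C\<in>cycles_on v S. wtset m (snd v) C = WW
                            \<and> (\<forall>C'\<in>cycles_on v S. C' \<noteq> C \<longrightarrow> wtset m (snd v) C' = 0))
                       \<and> (\<forall>C\<in>cycles_on u S. wtset m (snd u) C = 0)"
  have part2: "(?c1 \<and> \<not> ?c2 \<and> \<not> ?c3) \<or> (\<not> ?c1 \<and> ?c2 \<and> \<not> ?c3) \<or> (\<not> ?c1 \<and> \<not> ?c2 \<and> ?c3)"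
  proof (cases "WW = 0")
    case True
    hence "nz S = 0" unfolding nz_def WW_def by simp
    hence "card (NU S) = 0" "card (NV S) = 0" using cnt by linarith+
    hence "NU S = {}" "NV S = {}" using finN by auto
    hence "\<forall>C\<in>cycles_on u S. wtset m (snd u) C = 0" "\<forall>C\<in>cycles_on v S. wtset m (snd v) C = 0"
      unfolding NU_def NV_def cu cv by auto
    thus ?thesis using True by simp
  next
    case False
    hence "nz S = 1" unfolding nz_def WW_def by simp
    hence c1: "card (NU S) + card (NV S) = 1" using cnt by linarith
    show ?thesis
    proof (cases "card (NU S) = 1")
      case True
      hence "card (NV S) = 0" using c1 by simp
      hence NV0: "NV S = {}" using finN by auto
      obtain C0 where C0: "NU S = {C0}" using True card_1_singletonE by blast
      have C0in: "C0 \<in> cyc U ` S" and C0nz: "wtset m (snd u) C0 \<noteq> 0" using C0 unfolding NU_def by auto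
      have others: "\<forall>C\<in>cyc U ` S. C \<noteq> C0 \<longrightarrow> wtset m (snd u) C = 0" using C0 unfolding NU_def by auto
      have allv: "\<forall>C\<in>cyc V ` S. wtset m (snd v) C = 0" using NV0 unfolding NV_def by auto
      have wv: "wtset m (snd v) S = 0" using wt_allzero[OF permV f sV m0 allv] .
      have wu: "wtset m (snd u) S = wtset m (snd u) C0" using wt_onenz[OF permU f sU m0 C0in others] .
      have wuW: "wtset m (snd u) S = WW" using ws wv wmod by simp
      have c2: ?c2 using wuW wu False C0in others allv unfolding cu cv by auto
      have nc3: "\<not> ?c3" using C0in C0nz unfolding cu by auto
      show ?thesis using False c2 nc3 by simp
    next
      case False2: False
      hence "card (NV S) = 1" "card (NU S) = 0" using c1 by auto
      then obtain C0 where C0: "NV S = {C0}" using card_1_singletonE by blast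
      have NU0: "NU S = {}" using \<open>card (NU S) = 0\<close> finN by auto
      have C0in: "C0 \<in> cyc V ` S" and C0nz: "wtset m (snd v) C0 \<noteq> 0" using C0 unfolding NV_def by auto
      have others: "\<forall>C\<in>cyc V ` S. C \<noteq> C0 \<longrightarrow> wtset m (snd v) C = 0" using C0 unfolding NV_def by auto
      have allu: "\<forall>C\<in>cyc U ` S. wtset m (snd u) C = 0" using NU0 unfolding NU_def by auto
      have wu: "wtset m (snd u) S = 0" using wt_allzero[OF permU f sU m0 allu] .
      have wv: "wtset m (snd v) S = wtset m (snd v) C0" using wt_onenz[OF permV f sV m0 C0in others] .
      have wvW: "wtset m (snd v) S = WW" using ws wu wmod by simp
      have c3: ?c3 using wvW wv False C0in others allu unfolding cu cv by auto
      have nc2: "\<not> ?c2" using C0in C0nz unfolding cv by auto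
      show ?thesis using False c3 nc2 by simp
    qed
  qed
  show ?thesis using part1 part2 unfolding S_def WW_def Let_def by simp
qed

end

theorem mainTheorem8:
  fixes m p n :: nat and u w :: gelt
  assumes "0 < m" "0 < p" "0 < n" "p dvd m"
    and "in_G m p n u" and "in_G m p n w"
  shows "int (codimfix m n u) + int (codimfix m n (gmult m (ginv m u) w))
           \<ge> int n + int (card (cycles n w)) - 2 * int (card (Pi_part n u w))
             + int (card {B \<in> Pi_part n u w. wtset m (snd w) (Supp B) \<noteq> 0})
    \<and> (int (codimfix m n u) + int (codimfix m n (gmult m (ginv m u) w))
           = int n + int (card (cycles n w)) - 2 * int (card (Pi_part n u w))
             + int (card {B \<in> Pi_part n u w. wtset m (snd w) (Supp B) \<noteq> 0})
         \<longrightarrow> (\<forall>B\<in>Pi_part n u w.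
           (let S = Supp B; v = gmult m (ginv m u) w; W = wtset m (snd w) S;
                case1 = (W = 0 \<and> (\<forall>C\<in>cycles_on u S. wtset m (snd u) C = 0)
                       \<and> (\<forall>C\<in>cycles_on v S. wtset m (snd v) C = 0));
                case2 = (wtset m (snd u) S = W \<and> W \<noteq> 0
                       \<and> (\<exists>C\<in>cycles_on u S. wtset m (snd u) C = W
                            \<and> (\<forall>C'\<in>cycles_on u S. C' \<noteq> C \<longrightarrow> wtset m (snd u) C' = 0))
                       \<and> (\<forall>C\<in>cycles_on v S. wtset m (snd v) C = 0));
                case3 = (wtset m (snd v) S = W \<and> W \<noteq> 0
                       \<and> (\<exists>C\<in>cycles_on v S. wtset m (snd v) C = W
                            \<and> (\<forall>C'\<in>cycles_on v S. C' \<noteq> C \<longrightarrow> wtset m (snd v) C' = 0))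
                       \<and> (\<forall>C\<in>cycles_on u S. wtset m (snd u) C = 0))
            in int (card (cycles_on u S)) + int (card (cycles_on v S))
                 = int (card S) - int (card (cycles_on w S)) + 2
               \<and> ((case1 \<and> \<not> case2 \<and> \<not> case3) \<or> (\<not> case1 \<and> case2 \<and> \<not> case3) \<or> (\<not> case1 \<and> \<not> case2 \<and> case3)))))"
proof -
  interpret st: setting m p n u w by unfold_locales (use assms in auto)
  define L where "L = int (codimfix m n u) + int (codimfix m n (gmult m (ginv m u) w))"
  define Rr where "Rr = int n + int (card (cycles n w)) - 2 * int (card (Pi_part n u w))
             + int (card {B \<in> Pi_part n u w. wtset m (snd w) (Supp B) \<noteq> 0})"
  have key: "L - Rr = (\<Sum>B\<in>st.P. st.d1 B + st.d2 B)"
    using st.key unfolding L_def Rr_def st.v_def st.P_def by simp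
  have nn: "\<forall>B\<in>st.P. st.d1 B + st.d2 B \<ge> 0" using st.d1_nonneg st.d2_nonneg by (simp add: add_nonneg_nonneg)
  have "(\<Sum>B\<in>st.P. st.d1 B + st.d2 B) \<ge> 0" using nn by (intro sum_nonneg) auto
  hence ineq: "L \<ge> Rr" using key by simp
  have eqc: "L = Rr \<longrightarrow> (\<forall>B\<in>Pi_part n u w.
           (let S = Supp B; v = gmult m (ginv m u) w; W = wtset m (snd w) S;
                case1 = (W = 0 \<and> (\<forall>C\<in>cycles_on u S. wtset m (snd u) C = 0)
                       \<and> (\<forall>C\<in>cycles_on v S. wtset m (snd v) C = 0));
                case2 = (wtset m (snd u) S = W \<and> W \<noteq> 0
                       \<and> (\<exists>C\<in>cycles_on u S. wtset m (snd u) C = W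
                            \<and> (\<forall>C'\<in>cycles_on u S. C' \<noteq> C \<longrightarrow> wtset m (snd u) C' = 0))
                       \<and> (\<forall>C\<in>cycles_on v S. wtset m (snd v) C = 0));
                case3 = (wtset m (snd v) S = W \<and> W \<noteq> 0
                       \<and> (\<exists>C\<in>cycles_on v S. wtset m (snd v) C = W
                            \<and> (\<forall>C'\<in>cycles_on v S. C' \<noteq> C \<longrightarrow> wtset m (snd v) C' = 0))
                       \<and> (\<forall>C\<in>cycles_on u S. wtset m (snd u) C = 0))
            in int (card (cycles_on u S)) + int (card (cycles_on v S))
                 = int (card S) - int (card (cycles_on w S)) + 2
               \<and> ((case1 \<and> \<not> case2 \<and> \<not> case3) \<or> (\<not> case1 \<and> case2 \<and> \<not> case3) \<or> (\<not> case1 \<and> \<not> case2 \<and> case3))))"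
  proof (intro impI ballI)
    fix B assume LR: "L = Rr" and B0: "B \<in> Pi_part n u w"
    have B: "B \<in> st.P" using B0 unfolding st.P_def .
    have "(\<Sum>B\<in>st.P. st.d1 B + st.d2 B) = 0" using key LR by simp
    hence "\<forall>B\<in>st.P. st.d1 B + st.d2 B = 0"
      using sum_nonneg_eq_0_iff[OF st.finP, of "\<lambda>B. st.d1 B + st.d2 B"] nn by simp
    hence z: "st.d1 B = 0" "st.d2 B = 0" using B st.d1_nonneg[OF B] st.d2_nonneg[OF B] by auto
    show "let S = Supp B; v = gmult m (ginv m u) w; W = wtset m (snd w) S;
                case1 = (W = 0 \<and> (\<forall>C\<in>cycles_on u S. wtset m (snd u) C = 0)
                       \<and> (\<forall>C\<in>cycles_on v S. wtset m (snd v) C = 0));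
                case2 = (wtset m (snd u) S = W \<and> W \<noteq> 0
                       \<and> (\<exists>C\<in>cycles_on u S. wtset m (snd u) C = W
                            \<and> (\<forall>C'\<in>cycles_on u S. C' \<noteq> C \<longrightarrow> wtset m (snd u) C' = 0))
                       \<and> (\<forall>C\<in>cycles_on v S. wtset m (snd v) C = 0));
                case3 = (wtset m (snd v) S = W \<and> W \<noteq> 0
                       \<and> (\<exists>C\<in>cycles_on v S. wtset m (snd v) C = W
                            \<and> (\<forall>C'\<in>cycles_on v S. C' \<noteq> C \<longrightarrow> wtset m (snd v) C' = 0))
                       \<and> (\<forall>C\<in>cycles_on u S. wtset m (snd u) C = 0))
            in int (card (cycles_on u S)) + int (card (cycles_on v S))
                 = int (card S) - int (card (cycles_on w S)) + 2
               \<and> ((case1 \<and> \<not> case2 \<and> \<not> case3) \<or> (\<not> case1 \<and> case2 \<and> \<not> case3) \<or> (\<not> case1 \<and> \<not> case2 \<and> case3))"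
      using st.block_final[OF B z] unfolding Let_def st.v_def .
  qed
  show ?thesis unfolding L_def[symmetric] Rr_def[symmetric] by (rule conjI[OF ineq eqc])
qed


end
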